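(* Let $F$ be a nonarchimedean local field of characteristic zero with ramification index $e$ and residue degree $f$, and let $D^F$ and $\rho_F$ be as in the context. Let $a:F\to\mathbb{C}$ be a continuous function such that $|a(x)|=\mathcal{O}\!\left(\frac{1}{1+|x|^{\alpha}}\right)$ for some $\alpha>1$ with $\alpha>ef/2$. Then $\rho_F(a)(D^F)^{-1}$ (defined on the range of $D^F$, which is dense) is a compact operator on $H^F$.
   Context: Let $p$ be a prime and $F$ a finite extension of $\mathbb{Q}_p$ with absolute value $|\cdot|$ extending the $p$-adic one; $R=\{|x|\le1\}$, $\pi$ a uniformizer with $|\pi|=p^{-1/e}$, residue field $R/(\pi)$ of size $p^f$, and $S=\{s_0=0,s_1,\dots,s_{p^f-1}\}\subset R$ a set of representatives of $R/(\pi)$ containing $0$. For $n\in\mathbb{Z}$ let $X_n^F=\{\sum_{k=k_0}^{n-1}x_k\pi^k: k_0\in\mathbb{Z},\ x_k\in S\}$ (one point in each ball of $F$ of radius $p^{-n/e}$). Let $H^F$ be the Hilbert space of families $\phi=(\phi_n)_{n\in\mathbb{Z}}$, $\phi_n:X_n^F\to\mathbb{C}$, with $\|\phi\|^2=\sum_{n\in\mathbb{Z}}\sum_{x\in X_n^F}|\phi_n(x)|^2p^{-nf}<\infty$. Define $(D\phi)_n(x)=p^{n/e}\big(\phi_n(x)-p^{-f}\sum_{s\in S}\phi_{n+1}(x+s\pi^n)\big)$ and let $D^F$ be $D$ on its maximal domain in $H^F$; $D^F$ is injective. For $a\in C_0(F)$ (or any bounded continuous $a$) define $\rho_F(a)$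 on $H^F$ by $(\rho_F(a)\phi)_n(x)=a(x)\phi_n(x)$ if $0\ne x\in X_n^F$ and $(\rho_F(a)\phi)_n(0)=a(\pi^{n})\phi_n(0)$. *)

theory Defs
  imports "HOL-Analysis.Analysis"
begin

definition nonarch_abs :: "('a::field \<Rightarrow> real) \<Rightarrow> bool" where
  "nonarch_abs v \<longleftrightarrow> (\<forall>x. v x \<ge> 0) \<and> (\<forall>x. v x = 0 \<longleftrightarrow> x = 0) \<and>
     (\<forall>x y. v (x * y) = v x * v y) \<and> (\<forall>x y. v (x + y) \<le> max (v x) (v y))"

text \<open>The field (of characteristic zero) with absolute value v is a nonarchimedean local field
  of characteristic zero: v extends the p-adic absolute value (|p| = 1/p), the field is complete,
  v is discrete with uniformizer pi, |pi| = p^(-1/e), and S (containing 0) is a set of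
  representatives of the residue field R/(pi), which has p^f elements.\<close>
definition local_field_data ::
  "('a::field_char_0 \<Rightarrow> real) \<Rightarrow> nat \<Rightarrow> nat \<Rightarrow> nat \<Rightarrow> 'a \<Rightarrow> 'a set \<Rightarrow> bool" where
  "local_field_data v p e f \<pi> S \<longleftrightarrow>
     nonarch_abs v \<and> prime p \<and> e \<ge> 1 \<and> f \<ge> 1 \<and>
     v (of_nat p) = 1 / real p \<and>
     (\<forall>X::nat \<Rightarrow> 'a. (\<forall>\<epsilon>>0. \<exists>N. \<forall>m\<ge>N. \<forall>n\<ge>N. v (X m - X n) < \<epsilon>) \<longrightarrow>
        (\<exists>L. \<forall>\<epsilon>>0. \<exists>N. \<forall>n\<ge>N. v (X n - L) < \<epsilon>)) \<and>
     v \<pi> = real p powr (- 1 / real e) \<and>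
     (\<forall>x. x \<noteq> 0 \<longrightarrow> (\<exists>k::int. v x = v \<pi> powi k)) \<and>
     finite S \<and> card S = p ^ f \<and> 0 \<in> S \<and> S \<subseteq> {r. v r \<le> 1} \<and>
     (\<forall>r. v r \<le> 1 \<longrightarrow> (\<exists>!s. s \<in> S \<and> v (r - s) < 1))"

definition v_continuous :: "('a::field \<Rightarrow> real) \<Rightarrow> ('a \<Rightarrow> complex) \<Rightarrow> bool" where
  "v_continuous v a \<longleftrightarrow>
     (\<forall>x. \<forall>\<epsilon>>0. \<exists>\<delta>>0. \<forall>y. v (y - x) < \<delta> \<longrightarrow> cmod (a y - a x) < \<epsilon>)"

definition Xset :: "'a::field \<Rightarrow> 'a set \<Rightarrow> int \<Rightarrow> 'a set" where
  "Xset \<pi> S n = {x. \<exists>(k0::int) (c::int \<Rightarrow> 'a). (\<forall>k. c k \<in> S) \<and>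
                      x = (\<Sum>k\<in>{k0..<n}. c k * \<pi> powi k)}"

definition wt :: "nat \<Rightarrow> nat \<Rightarrow> int \<Rightarrow> real" where
  "wt p f n = real p powr (- (real_of_int n * real f))"

text \<open>Squared norm on H^F (elements: phi n x, with phi n x = 0 off X_n).\<close>
definition hnorm2 :: "nat \<Rightarrow> nat \<Rightarrow> 'a::field \<Rightarrow> 'a set \<Rightarrow> (int \<Rightarrow> 'a \<Rightarrow> complex) \<Rightarrow> real" where
  "hnorm2 p f \<pi> S \<phi> =
     (\<Sum>\<^sub>\<infinity>(n, x) \<in> Sigma UNIV (Xset \<pi> S). (cmod (\<phi> n x))\<^sup>2 * wt p f n)"

definition inH :: "nat \<Rightarrow> nat \<Rightarrow> 'a::field \<Rightarrow> 'a set \<Rightarrow> (int \<Rightarrow> 'a \<Rightarrow> complex) \<Rightarrow> bool" where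
  "inH p f \<pi> S \<phi> \<longleftrightarrow> (\<forall>n x. x \<notin> Xset \<pi> S n \<longrightarrow> \<phi> n x = 0) \<and>
     ((\<lambda>(n, x). (cmod (\<phi> n x))\<^sup>2 * wt p f n) summable_on Sigma UNIV (Xset \<pi> S))"

definition Dop :: "nat \<Rightarrow> nat \<Rightarrow> nat \<Rightarrow> 'a::field \<Rightarrow> 'a set \<Rightarrow>
                   (int \<Rightarrow> 'a \<Rightarrow> complex) \<Rightarrow> int \<Rightarrow> 'a \<Rightarrow> complex" where
  "Dop p e f \<pi> S \<phi> n x =
     (if x \<in> Xset \<pi> S n then
        complex_of_real (real p powr (real_of_int n / real e)) *
          (\<phi> n x - (\<Sum>s\<in>S. \<phi> (n + 1) (x + s * \<pi> powi n)) / of_nat (p ^ f))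
      else 0)"

definition domD :: "nat \<Rightarrow> nat \<Rightarrow> nat \<Rightarrow> 'a::field \<Rightarrow> 'a set \<Rightarrow> (int \<Rightarrow> 'a \<Rightarrow> complex) set" where
  "domD p e f \<pi> S = {\<phi>. inH p f \<pi> S \<phi> \<and> inH p f \<pi> S (Dop p e f \<pi> S \<phi>)}"

definition rho :: "'a::field \<Rightarrow> 'a set \<Rightarrow> ('a \<Rightarrow> complex) \<Rightarrow>
                   (int \<Rightarrow> 'a \<Rightarrow> complex) \<Rightarrow> int \<Rightarrow> 'a \<Rightarrow> complex" where
  "rho \<pi> S a \<phi> n x =
     (if x \<in> Xset \<pi> S n then (if x = 0 then a (\<pi> powi n) * \<phi> n 0 else a x * \<phi> n x) else 0)"

text \<open>rho_F(a) (D^F)^{-1}, defined on ran D^F, is compact: every bounded sequence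
  psi_j = D phi_j (phi_j in dom D^F, so (D^F)^{-1} psi_j = phi_j by injectivity) is mapped to a
  sequence rho(a) phi_j having a Cauchy (hence, H^F being complete, convergent) subsequence.\<close>
definition rhoDinv_compact :: "nat \<Rightarrow> nat \<Rightarrow> nat \<Rightarrow> 'a::field \<Rightarrow> 'a set \<Rightarrow> ('a \<Rightarrow> complex) \<Rightarrow> bool" where
  "rhoDinv_compact p e f \<pi> S a \<longleftrightarrow>
     (\<forall>\<phi>s::nat \<Rightarrow> _.
        (\<forall>j. \<phi>s j \<in> domD p e f \<pi> S) \<and> (\<exists>B::real. \<forall>j. hnorm2 p f \<pi> S (Dop p e f \<pi> S (\<phi>s j)) \<le> B) \<longrightarrow>
        (\<exists>r::nat \<Rightarrow> nat. strict_mono r \<and>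
           (\<forall>\<epsilon>>0. \<exists>N. \<forall>i\<ge>N. \<forall>j\<ge>N.
              hnorm2 p f \<pi> S (rho \<pi> S a (\<phi>s (r i)) - rho \<pi> S a (\<phi>s (r j))) < \<epsilon>)))"

end

theory Submission
  imports Defs "HOL-Library.Diagonal_Subsequence"
begin

locale LF =
  fixes v :: "'a::field_char_0 \<Rightarrow> real" and p e f :: nat and \<pi> :: 'a and S :: "'a set"
  assumes lfd: "local_field_data v p e f \<pi> S"
begin

abbreviation X where "X \<equiv> Xset \<pi> S"

definition q where "q = v \<pi>"

lemma na: "nonarch_abs v" by (insert lfd, unfold local_field_data_def, elim conjE, assumption)
lemma v_nonneg: "v x \<ge> 0" by (insert na, unfold nonarch_abs_def, elim conjE, blast)
lemma v_zero_iff: "v x = 0 \<longleftrightarrow> x = 0" by (insert na, unfold nonarch_abs_def, elim conjE, blast)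
lemma v_mult: "v (x * y) = v x * v y" by (insert na, unfold nonarch_abs_def, elim conjE, blast)
lemma v_add: "v (x + y) \<le> max (v x) (v y)" by (insert na, unfold nonarch_abs_def, elim conjE, blast)
lemma p_prime: "prime p" by (insert lfd, unfold local_field_data_def, elim conjE, assumption)
lemma e_ge1: "e \<ge> 1" by (insert lfd, unfold local_field_data_def, elim conjE, assumption)
lemma f_ge1: "f \<ge> 1" by (insert lfd, unfold local_field_data_def, elim conjE, assumption)
lemma q_eq: "q = real p powr (- 1 / real e)" unfolding q_def by (insert lfd, unfold local_field_data_def, elim conjE, assumption)
lemma finS: "finite S" by (insert lfd, unfold local_field_data_def, elim conjE, assumption)
lemma cardS: "card S = p ^ f" by (insert lfd, unfold local_field_data_def, elim conjE, assumption)
lemma zeroS: "0 \<in> S" by (insert lfd, unfold local_field_data_def, elim conjE, assumption)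
lemma S_sub: "S \<subseteq> {r. v r \<le> 1}" by (insert lfd, unfold local_field_data_def, elim conjE, assumption)
lemma S_le1: "s \<in> S \<Longrightarrow> v s \<le> 1" using S_sub by auto
lemma reps_all: "\<forall>r. v r \<le> 1 \<longrightarrow> (\<exists>!s. s \<in> S \<and> v (r - s) < 1)"
  by (insert lfd, unfold local_field_data_def, elim conjE, assumption)
lemma reps: "v r \<le> 1 \<Longrightarrow> \<exists>!s. s \<in> S \<and> v (r - s) < 1"
  using reps_all by blast

lemma p_ge2: "p \<ge> 2" using p_prime prime_ge_2_nat by blast

lemma v_one: "v 1 = 1"
proof -
  have "v 1 = v 1 * v 1" using v_mult[of 1 1] by simp
  moreover have "v 1 \<noteq> 0" using v_zero_iff by simp
  ultimately show ?thesis by simp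
qed

lemma v_minus: "v (- x) = v x"
proof -
  have "v (-1) * v (-1) = 1" using v_mult[of "-1" "-1"] v_one by simp
  hence "(v (-1) - 1) * (v (-1) + 1) = 0" by (simp add: algebra_simps)
  moreover have "v (-1) + 1 \<noteq> 0" using v_nonneg[of "-1"] by linarith
  ultimately have "v (-1) = 1" by simp
  thus ?thesis using v_mult[of "-1" x] by simp
qed

lemma v_diff: "v (x - y) \<le> max (v x) (v y)"
  using v_add[of x "-y"] v_minus[of y] by simp

lemma v_strict: assumes "v y < v x" shows "v (x + y) = v x"
proof -
  have a: "v (x + y) \<le> v x" using v_add[of x y] assms by simp
  have "v x = v ((x + y) + (- y))" by simp
  also have "\<dots> \<le> max (v (x+y)) (v (- y))" by (rule v_add)
  also have "\<dots> = max (v (x+y)) (v y)" by (simp add: v_minus)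
  finally have "v x \<le> v (x + y)" using assms by auto
  thus ?thesis using a by simp
qed

lemma v_inverse: "v (inverse x) = inverse (v x)"
proof (cases "x = 0")
  case True thus ?thesis using v_zero_iff[of 0] by simp
next
  case False
  have "v (inverse x) * v x = 1" using v_mult[of "inverse x" x] False v_one by simp
  moreover have "v x \<noteq> 0" using False v_zero_iff by simp
  ultimately show ?thesis by (metis inverse_unique mult.commute)
qed

lemma v_power: "v (x ^ k) = v x ^ k"
  by (induction k) (auto simp: v_one v_mult)

lemma v_powi: "v (x powi k) = v x powi k"
  by (simp add: power_int_def v_power v_inverse)

lemma q_pos: "0 < q"
  using q_eq p_ge2 by simp

lemma q_lt1: "q < 1"
proof -
  have "real p > 1" using p_ge2 by simp
  moreover have "- 1 / real e < 0" using e_ge1 by simp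
  ultimately show ?thesis using q_eq powr_less_one by auto
qed

lemma pi_nz: "\<pi> \<noteq> 0"
proof
  assume "\<pi> = 0"
  hence "q = 0" unfolding q_def using v_zero_iff[of 0] by simp
  thus False using q_pos by simp
qed

lemma v_pipow: "v (\<pi> powi k) = q powi k" by (simp add: v_powi q_def)

lemma qpow_pos: "0 < q powi k" using q_pos by simp

lemma qpow_strict: "m < n \<Longrightarrow> q powi n < q powi m"
  by (rule power_int_strict_decreasing) (use q_pos q_lt1 in auto)

lemma qpow_mono: assumes "m \<le> n" shows "q powi n \<le> q powi m"
proof (cases "m = n")
  case False
  hence "m < n" using assms by simp
  thus ?thesis using qpow_strict[of m n] by simp
qed simp

lemma S_dist: assumes "s \<in> S" "s' \<in> S" "s \<noteq> s'" shows "v (s - s') = 1"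
proof -
  have le: "v (s - s') \<le> 1" using v_diff[of s s'] S_le1[OF assms(1)] S_le1[OF assms(2)] by simp
  have "v s \<le> 1" using S_le1 assms by auto
  from reps[OF this] obtain t where "t \<in> S \<and> v (s - t) < 1" and u: "\<And>t'. t' \<in> S \<and> v (s - t') < 1 \<Longrightarrow> t' = t"
    by blast
  have "s = t" using u[of s] assms v_zero_iff[of 0] by simp
  show ?thesis
  proof (rule ccontr)
    assume "v (s - s') \<noteq> 1"
    hence "v (s - s') < 1" using le by simp
    hence "s' = t" using u assms by blast
    thus False using \<open>s = t\<close> assms by simp
  qed
qed

lemma S_01: "s \<in> S \<Longrightarrow> s = 0 \<or> v s = 1"
  using S_dist[of s 0] zeroS by auto

lemma v_sum_le: "finite A \<Longrightarrow> 0 \<le> M \<Longrightarrow> (\<forall>k\<in>A. v (g k) \<le> M) \<Longrightarrow> v (sum g A) \<le> M"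
proof (induction A rule: finite_induct)
  case empty thus ?case using v_zero_iff[of 0] by simp
next
  case (insert x F)
  have "v (sum g (insert x F)) = v (g x + sum g F)" using insert by simp
  also have "\<dots> \<le> max (v (g x)) (v (sum g F))" by (rule v_add)
  also have "\<dots> \<le> M" using insert by auto
  finally show ?case .
qed

lemma Lvan_aux:
  assumes D: "\<forall>k. D k = 0 \<or> v (D k) = 1"
  shows "\<forall>m. nat (n - m) = N \<longrightarrow> v (\<Sum>k\<in>{m..<n}. D k * \<pi> powi k) \<le> q powi n
           \<longrightarrow> (\<Sum>k\<in>{m..<n}. D k * \<pi> powi k) = 0"
proof (induction N)
  case 0
  then show ?case by auto
next
  case (Suc N)
  show ?case
  proof (intro allI impI)
    fix m assume mN: "nat (n - m) = Suc N" and le: "v (\<Sum>k\<in>{m..<n}. D k * \<pi> powi k) \<le> q powi n"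
    have mn: "m < n" using mN by simp
    have split: "{m..<n} = insert m {m+1..<n}" using mn by auto
    define y' where "y' = (\<Sum>k\<in>{m+1..<n}. D k * \<pi> powi k)"
    have sum_eq: "(\<Sum>k\<in>{m..<n}. D k * \<pi> powi k) = D m * \<pi> powi m + y'"
      unfolding y'_def split by (subst sum.insert) auto
    have vy': "v y' \<le> q powi (m+1)"
      unfolding y'_def
    proof (rule v_sum_le)
      show "0 \<le> q powi (m+1)" using qpow_pos less_imp_le by blast
      show "\<forall>k\<in>{m + 1..<n}. v (D k * \<pi> powi k) \<le> q powi (m + 1)"
      proof
        fix k assume k: "k \<in> {m+1..<n}"
        have "v (D k * \<pi> powi k) = v (D k) * q powi k" by (simp add: v_mult v_pipow)
        also have "\<dots> \<le> 1 * q powi k"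
        proof (rule mult_right_mono)
          show "v (D k) \<le> 1" using D[rule_format, of k] v_zero_iff[of "D k"] by linarith
          show "0 \<le> q powi k" using qpow_pos[of k] by simp
        qed
        also have "\<dots> \<le> q powi (m+1)" using qpow_mono k by auto
        finally show "v (D k * \<pi> powi k) \<le> q powi (m + 1)" .
      qed
    qed auto
    have Dm: "D m = 0"
    proof (rule ccontr)
      assume "D m \<noteq> 0"
      hence "v (D m) = 1" using D by blast
      hence vDm: "v (D m * \<pi> powi m) = q powi m" by (simp add: v_mult v_pipow)
      have "v y' < v (D m * \<pi> powi m)" using vDm vy' qpow_strict[of m "m+1"] by simp
      hence "v (D m * \<pi> powi m + y') = q powi m" using v_strict vDm by metis
      hence "q powi m \<le> q powi n" using le sum_eq by simp
      thus False using qpow_strict[OF mn] by simp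
    qed
    have "nat (n - (m+1)) = N" using mN by simp
    moreover have "v y' \<le> q powi n" using le sum_eq Dm by simp
    ultimately have "y' = 0" using Suc.IH unfolding y'_def by blast
    thus "(\<Sum>k\<in>{m..<n}. D k * \<pi> powi k) = 0" using sum_eq Dm by simp
  qed
qed

lemma Lvan:
  assumes "\<forall>k. D k = 0 \<or> v (D k) = 1" "v (\<Sum>k\<in>{m..<n}. D k * \<pi> powi k) \<le> q powi n"
  shows "(\<Sum>k\<in>{m..<n}. D k * \<pi> powi k) = 0"
  using Lvan_aux[OF assms(1), of n "nat (n - m)"] assms(2) by blast

lemma sum_ext:
  assumes "m \<le> k0"
  shows "(\<Sum>k\<in>{m..<n}. (if k0 \<le> k then c k else 0) * \<pi> powi k) = (\<Sum>k\<in>{k0..<n}. c k * \<pi> powi k)"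
proof -
  have "(\<Sum>k\<in>{m..<n}. (if k0 \<le> k then c k else 0) * \<pi> powi k)
       = (\<Sum>k\<in>{m..<n}. if k0 \<le> k then c k * \<pi> powi k else 0)"
    by (rule sum.cong) auto
  also have "\<dots> = (\<Sum>k\<in>{k\<in>{m..<n}. k0 \<le> k}. c k * \<pi> powi k)"
    by (rule sum.inter_filter[symmetric]) auto
  also have "{k\<in>{m..<n}. k0 \<le> k} = {k0..<n}" using assms by auto
  finally show ?thesis .
qed

lemma Xset_repr:
  assumes "x \<in> X n"
  shows "\<exists>k0 c. (\<forall>k. c k \<in> S) \<and> (\<forall>m\<le>k0. x = (\<Sum>k\<in>{m..<n}. c k * \<pi> powi k))"
proof -
  obtain k0 c where c: "\<forall>k. c k \<in> S" and x: "x = (\<Sum>k\<in>{k0..<n}. c k * \<pi> powi k)"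
    using assms unfolding Xset_def by blast
  define c' where "c' = (\<lambda>k. if k0 \<le> k then c k else 0)"
  have "\<forall>k. c' k \<in> S" using c zeroS unfolding c'_def by auto
  moreover have "\<forall>m\<le>k0. x = (\<Sum>k\<in>{m..<n}. c' k * \<pi> powi k)"
  proof (intro allI impI)
    fix m assume "m \<le> k0"
    from sum_ext[OF this, where n=n and c=c] show "x = (\<Sum>k\<in>{m..<n}. c' k * \<pi> powi k)"
      unfolding c'_def x by simp
  qed
  ultimately show ?thesis by (intro exI[of _ k0] exI[of _ c'] conjI)
qed

lemma X0: "0 \<in> X n"
  unfolding Xset_def by (rule CollectI, rule exI[of _ n], rule exI[of _ "\<lambda>_. 0"]) (auto simp: zeroS)

lemma Xdiff:
  assumes "x \<in> X n" "x' \<in> X n" "v (x - x') \<le> q powi n"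
  shows "x = x'"
proof -
  obtain k0 c where c: "\<forall>k. c k \<in> S" "\<forall>m\<le>k0. x = (\<Sum>k\<in>{m..<n}. c k * \<pi> powi k)"
    using Xset_repr[OF assms(1)] by blast
  obtain k0' c' where c': "\<forall>k. c' k \<in> S" "\<forall>m\<le>k0'. x' = (\<Sum>k\<in>{m..<n}. c' k * \<pi> powi k)"
    using Xset_repr[OF assms(2)] by blast
  define m where "m = min k0 k0'"
  have "x - x' = (\<Sum>k\<in>{m..<n}. c k * \<pi> powi k) - (\<Sum>k\<in>{m..<n}. c' k * \<pi> powi k)"
    using c(2)[rule_format, of m] c'(2)[rule_format, of m] unfolding m_def by simp
  also have "\<dots> = (\<Sum>k\<in>{m..<n}. (c k - c' k) * \<pi> powi k)"
    by (simp add: sum_subtractf left_diff_distrib)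
  finally have eq: "x - x' = (\<Sum>k\<in>{m..<n}. (c k - c' k) * \<pi> powi k)" .
  have D: "\<forall>k. c k - c' k = 0 \<or> v (c k - c' k) = 1"
    using S_dist c(1) c'(1) by auto
  have "x - x' = 0" using Lvan[OF D] eq assms(3) by simp
  thus ?thesis by simp
qed

lemma Xnz: assumes "x \<in> X n" "x \<noteq> 0" shows "q powi n < v x"
  using Xdiff[OF assms(1) X0] assms(2) by force

end


context LF begin

lemma Xsucc: "X (n+1) = (\<Union>s\<in>S. (\<lambda>x. x + s * \<pi> powi n) ` X n)"
proof
  show "X (n+1) \<subseteq> (\<Union>s\<in>S. (\<lambda>x. x + s * \<pi> powi n) ` X n)"
  proof
    fix y assume "y \<in> X (n+1)"
    from Xset_repr[OF this] obtain k0 c where c: "\<forall>k. c k \<in> S"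
      "\<forall>m\<le>k0. y = (\<Sum>k\<in>{m..<n+1}. c k * \<pi> powi k)" by blast
    define m where "m = min k0 n"
    have y: "y = (\<Sum>k\<in>{m..<n+1}. c k * \<pi> powi k)" using c(2) unfolding m_def by simp
    have "{m..<n+1} = insert n {m..<n}" unfolding m_def by auto
    hence "y = c n * \<pi> powi n + (\<Sum>k\<in>{m..<n}. c k * \<pi> powi k)" using y by simp
    moreover have xin: "(\<Sum>k\<in>{m..<n}. c k * \<pi> powi k) \<in> X n"
      unfolding Xset_def by (rule CollectI, rule exI[of _ m], rule exI[of _ c]) (use c(1) in blast)
    ultimately have "y = (\<lambda>x. x + c n * \<pi> powi n) (\<Sum>k\<in>{m..<n}. c k * \<pi> powi k)" by simp
    hence "y \<in> (\<lambda>x. x + c n * \<pi> powi n) ` X n" using xin by blast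
    thus "y \<in> (\<Union>s\<in>S. (\<lambda>x. x + s * \<pi> powi n) ` X n)"
      using c(1) by blast
  qed
next
  show "(\<Union>s\<in>S. (\<lambda>x. x + s * \<pi> powi n) ` X n) \<subseteq> X (n+1)"
  proof safe
    fix s x assume s: "s \<in> S" and x: "x \<in> X n"
    from Xset_repr[OF x] obtain k0 c where c: "\<forall>k. c k \<in> S"
      "\<forall>m\<le>k0. x = (\<Sum>k\<in>{m..<n}. c k * \<pi> powi k)" by blast
    define m where "m = min k0 n"
    have xe: "x = (\<Sum>k\<in>{m..<n}. c k * \<pi> powi k)" using c(2) unfolding m_def by simp
    define c' where "c' = c(n := s)"
    have "{m..<n+1} = insert n {m..<n}" unfolding m_def by auto
    hence "(\<Sum>k\<in>{m..<n+1}. c' k * \<pi> powi k) = s * \<pi> powi n + (\<Sum>k\<in>{m..<n}. c' k * \<pi> powi k)"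
      unfolding c'_def by simp
    also have "(\<Sum>k\<in>{m..<n}. c' k * \<pi> powi k) = x"
      unfolding xe c'_def by (rule sum.cong) auto
    finally have "x + s * \<pi> powi n = (\<Sum>k\<in>{m..<n+1}. c' k * \<pi> powi k)" by simp
    moreover have "\<forall>k. c' k \<in> S" using c(1) s unfolding c'_def by auto
    ultimately show "x + s * \<pi> powi n \<in> X (n+1)" unfolding Xset_def
      by (intro CollectI exI[of _ m] exI[of _ c']) blast
  qed
qed

lemma trans_disj:
  assumes "s \<in> S" "s' \<in> S" "s \<noteq> s'"
  shows "(\<lambda>x. x + s * \<pi> powi n) ` X n \<inter> (\<lambda>x. x + s' * \<pi> powi n) ` X n = {}"
proof (rule ccontr)
  assume "\<not> ?thesis"
  then obtain x x' where x: "x \<in> X n" and x': "x' \<in> X n" and eq: "x + s * \<pi> powi n = x' + s' * \<pi> powi n"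
    by blast
  have d: "x - x' = (s' - s) * \<pi> powi n" using eq by (simp add: algebra_simps)
  have "v (s' - s) = 1" using S_dist assms by auto
  hence "v (x - x') = q powi n" using d by (simp add: v_mult v_pipow)
  hence "x = x'" using Xdiff[OF x x'] by simp
  hence "(s' - s) * \<pi> powi n = 0" using d by simp
  hence "s' = s" using pi_nz by simp
  thus False using assms by simp
qed

lemma exists_low:
  "\<exists>M. M \<le> n \<and> R \<le> q powi M"
proof -
  have "1 < inverse q" using q_pos q_lt1 by (simp add: one_less_inverse)
  from real_arch_pow[OF this] obtain k where k: "R < inverse q ^ k" by blast
  define M where "M = min n (- int k)"
  have "q powi (- int k) = inverse q ^ k" by (simp add: power_int_minus power_inverse)
  moreover have "q powi (- int k) \<le> q powi M" using qpow_mono unfolding M_def by simp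
  moreover have "M \<le> n" unfolding M_def by simp
  ultimately have "M \<le> n \<and> R \<le> q powi M" using k by linarith
  thus ?thesis by blast
qed

lemma Xfin: "finite {x \<in> X n. v x \<le> R}"
proof -
  obtain M where M: "M \<le> n" "R \<le> q powi M" using exists_low by blast
  let ?g = "\<lambda>c. (\<Sum>k\<in>{M..<n}. c k * \<pi> powi k)"
  have "{x \<in> X n. v x \<le> R} \<subseteq> ?g ` PiE {M..<n} (\<lambda>_. S)"
  proof
    fix x assume xx: "x \<in> {x \<in> X n. v x \<le> R}"
    hence x: "x \<in> X n" and vx: "v x \<le> R" by auto
    from Xset_repr[OF x] obtain k0 c where c: "\<forall>k. c k \<in> S"
      "\<forall>m\<le>k0. x = (\<Sum>k\<in>{m..<n}. c k * \<pi> powi k)" by blast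
    have xM: "x = ?g c"
    proof (cases "M \<le> k0")
      case True thus ?thesis using c(2) by simp
    next
      case False
      have x0: "x = (\<Sum>k\<in>{k0..<n}. c k * \<pi> powi k)" using c(2) by simp
      have un: "{k0..<n} = {k0..<M} \<union> {M..<n}" using False M(1) by auto
      define y where "y = (\<Sum>k\<in>{k0..<M}. c k * \<pi> powi k)"
      define z where "z = ?g c"
      have xyz: "x = y + z" unfolding x0 y_def z_def un
        by (rule sum.union_disjoint) auto
      have vz: "v z \<le> q powi M" unfolding z_def
      proof (rule v_sum_le)
        show "0 \<le> q powi M" using qpow_pos less_imp_le by blast
        show "\<forall>k\<in>{M..<n}. v (c k * \<pi> powi k) \<le> q powi M"
        proof
          fix k assume k: "k \<in> {M..<n}"
          have "v (c k * \<pi> powi k) = v (c k) * q powi k" by (simp add: v_mult v_pipow)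
          also have "\<dots> \<le> 1 * q powi k"
            by (rule mult_right_mono) (use S_le1 c(1) qpow_pos[of k] in auto)
          also have "\<dots> \<le> q powi M" using qpow_mono k by auto
          finally show "v (c k * \<pi> powi k) \<le> q powi M" .
        qed
      qed auto
      have "v y = v (x - z)" using xyz by simp
      also have "\<dots> \<le> max (v x) (v z)" by (rule v_diff)
      also have "\<dots> \<le> q powi M" using vx M(2) vz by simp
      finally have vy: "v y \<le> q powi M" .
      have D: "\<forall>k. c k = 0 \<or> v (c k) = 1" using S_01 c(1) by blast
      have "y = 0" using Lvan[OF D] vy unfolding y_def by blast
      thus ?thesis using xyz z_def by simp
    qed
    have "?g c = ?g (restrict c {M..<n})" by (rule sum.cong) auto
    moreover have "restrict c {M..<n} \<in> PiE {M..<n} (\<lambda>_. S)" using c(1) by auto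
    ultimately show "x \<in> ?g ` PiE {M..<n} (\<lambda>_. S)" using xM by blast
  qed
  moreover have "finite (?g ` PiE {M..<n} (\<lambda>_. S))"
    by (intro finite_imageI finite_PiE) (auto simp: finS)
  ultimately show ?thesis by (rule finite_subset)
qed

lemma Xcount: "countable (X n)"
proof -
  let ?g = "\<lambda>M c. (\<Sum>k\<in>{M..<n}. c k * \<pi> powi k)"
  have "X n \<subseteq> (\<Union>M. ?g M ` PiE {M..<n} (\<lambda>_. S))"
  proof
    fix x assume "x \<in> X n"
    then obtain k0 c where c: "\<forall>k. c k \<in> S" and x: "x = ?g k0 c"
      unfolding Xset_def by auto
    have "?g k0 c = ?g k0 (restrict c {k0..<n})" by (rule sum.cong) auto
    moreover have "restrict c {k0..<n} \<in> PiE {k0..<n} (\<lambda>_. S)" using c by auto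
    ultimately show "x \<in> (\<Union>M. ?g M ` PiE {M..<n} (\<lambda>_. S))" using x by blast
  qed
  moreover have "countable (\<Union>M. ?g M ` PiE {M..<n} (\<lambda>_. S))"
  proof (rule countable_UN)
    show "countable (UNIV :: int set)" by simp
    fix M :: int
    show "countable (?g M ` PiE {M..<n} (\<lambda>_. S))"
      by (intro countable_image countable_finite finite_PiE) (auto simp: finS)
  qed
  ultimately show ?thesis by (rule countable_subset)
qed

lemma Icount: "countable (Sigma UNIV X)"
  by (intro countable_SIGMA Xcount) auto

end

lemma tail_small:
  fixes g :: "'b \<Rightarrow> real"
  assumes sg: "g summable_on A" and nn: "\<And>x. x \<in> A \<Longrightarrow> 0 \<le> g x" and e: "\<epsilon> > 0"
  shows "\<exists>F. finite F \<and> F \<subseteq> A \<and> infsum g (A - F) \<le> \<epsilon>"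
proof -
  obtain F where F: "finite F" "F \<subseteq> A" "dist (sum g F) (infsum g A) \<le> \<epsilon>"
    using infsum_finite_approximation[OF sg e] by blast
  have s1: "g summable_on F" using F(1) by simp
  have s2: "g summable_on (A - F)" using sg by (rule summable_on_subset) auto
  have "infsum g A = infsum g (F \<union> (A - F))" using F(2) by (simp add: Un_absorb1)
  also have "\<dots> = infsum g F + infsum g (A - F)" by (rule infsum_Un_disjoint[OF s1 s2]) auto
  also have "infsum g F = sum g F" using F(1) by simp
  finally have "infsum g (A - F) = infsum g A - sum g F" by simp
  thus ?thesis using F by (intro exI[of _ F]) (auto simp: dist_real_def)
qed

lemma single_le_infsum:
  fixes g :: "'b \<Rightarrow> real"
  assumes sg: "g summable_on A" and nn: "\<And>x. x \<in> A \<Longrightarrow> 0 \<le> g x" and x: "x \<in> A"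
  shows "g x \<le> infsum g A"
  using finite_sum_le_infsum[OF sg, of "{x}"] x nn by auto

lemma mink:
  fixes u z :: "'b \<Rightarrow> complex" and w :: "'b \<Rightarrow> real"
  assumes su: "(\<lambda>x. (cmod (u x))^2 * w x) summable_on A"
    and sz: "(\<lambda>x. (cmod (z x))^2 * w x) summable_on A"
    and w: "\<And>x. x \<in> A \<Longrightarrow> 0 \<le> w x"
  shows "(\<lambda>x. (cmod (u x + z x))^2 * w x) summable_on A"
    and "sqrt (infsum (\<lambda>x. (cmod (u x + z x))^2 * w x) A)
          \<le> sqrt (infsum (\<lambda>x. (cmod (u x))^2 * w x) A) + sqrt (infsum (\<lambda>x. (cmod (z x))^2 * w x) A)"
proof -
  define U where "U = infsum (\<lambda>x. (cmod (u x))^2 * w x) A"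
  define Z where "Z = infsum (\<lambda>x. (cmod (z x))^2 * w x) A"
  have ss: "(\<lambda>x. 2 * ((cmod (u x))^2 * w x) + 2 * ((cmod (z x))^2 * w x)) summable_on A"
    by (intro summable_on_add summable_on_cmult_right su sz)
  have pt: "(cmod (u x + z x))^2 * w x \<le> 2 * ((cmod (u x))^2 * w x) + 2 * ((cmod (z x))^2 * w x)"
    if "x \<in> A" for x
  proof -
    have a: "cmod (u x + z x) \<le> cmod (u x) + cmod (z x)" by (rule norm_triangle_ineq)
    have "(cmod (u x + z x))^2 \<le> (cmod (u x) + cmod (z x))^2"
      using a by (intro power_mono) auto
    also have "\<dots> \<le> 2 * (cmod (u x))^2 + 2 * (cmod (z x))^2"
    proof -
      have "0 \<le> (cmod (u x) - cmod (z x))^2" by simp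
      thus ?thesis unfolding power2_sum power2_diff by linarith
    qed
    finally have "(cmod (u x + z x))^2 \<le> 2 * (cmod (u x))^2 + 2 * (cmod (z x))^2" .
    hence "(cmod (u x + z x))^2 * w x \<le> (2 * (cmod (u x))^2 + 2 * (cmod (z x))^2) * w x"
      using w[OF that] by (rule mult_right_mono)
    thus ?thesis by (simp add: algebra_simps)
  qed
  show S: "(\<lambda>x. (cmod (u x + z x))^2 * w x) summable_on A"
    by (rule summable_on_comparison_test[OF ss]) (use pt w in auto)
  have U0: "0 \<le> U" unfolding U_def by (rule infsum_nonneg) (use w in auto)
  have Z0: "0 \<le> Z" unfolding Z_def by (rule infsum_nonneg) (use w in auto)
  have "infsum (\<lambda>x. (cmod (u x + z x))^2 * w x) A \<le> (sqrt U + sqrt Z)^2"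
  proof (rule infsum_le_finite_sums[OF S])
    fix F assume F: "finite F" "F \<subseteq> A"
    have wF: "\<And>x. x \<in> F \<Longrightarrow> 0 \<le> w x" using F w by auto
    have L2eq: "L2_set (\<lambda>x. cmod (y x) * sqrt (w x)) F = sqrt (\<Sum>x\<in>F. (cmod (y x))^2 * w x)" for y
      unfolding L2_set_def
      by (rule arg_cong[where f=sqrt], rule sum.cong) (auto simp: power_mult_distrib wF)
    have le: "sqrt (\<Sum>x\<in>F. (cmod (y x))^2 * w x) \<le> sqrt (infsum (\<lambda>x. (cmod (y x))^2 * w x) A)"
      if sy: "(\<lambda>x. (cmod (y x))^2 * w x) summable_on A" for y
      using finite_sum_le_infsum[OF sy F] w by (auto intro: real_sqrt_le_mono)
    have "L2_set (\<lambda>x. cmod (u x + z x) * sqrt (w x)) F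
          \<le> L2_set (\<lambda>x. cmod (u x) * sqrt (w x) + cmod (z x) * sqrt (w x)) F"
    proof (rule L2_set_mono)
      fix x assume "x \<in> F"
      show "cmod (u x + z x) * sqrt (w x) \<le> cmod (u x) * sqrt (w x) + cmod (z x) * sqrt (w x)"
        using norm_triangle_ineq[of "u x" "z x"] wF[OF \<open>x\<in>F\<close>]
        by (simp add: distrib_right[symmetric] mult_right_mono)
      show "0 \<le> cmod (u x + z x) * sqrt (w x)" using wF[OF \<open>x\<in>F\<close>] by simp
    qed
    also have "\<dots> \<le> L2_set (\<lambda>x. cmod (u x) * sqrt (w x)) F + L2_set (\<lambda>x. cmod (z x) * sqrt (w x)) F"
      by (rule L2_set_triangle_ineq)
    also have "\<dots> \<le> sqrt U + sqrt Z"
      unfolding L2eq U_def Z_def by (intro add_mono le su sz)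
    finally have "sqrt (\<Sum>x\<in>F. (cmod (u x + z x))^2 * w x) \<le> sqrt U + sqrt Z"
      unfolding L2eq .
    moreover have "0 \<le> (\<Sum>x\<in>F. (cmod (u x + z x))^2 * w x)"
      by (rule sum_nonneg) (use wF in simp)
    ultimately show "(\<Sum>x\<in>F. (cmod (u x + z x))^2 * w x) \<le> (sqrt U + sqrt Z)^2"
    proof -
      assume a1: "sqrt (\<Sum>x\<in>F. (cmod (u x + z x))^2 * w x) \<le> sqrt U + sqrt Z"
        and a2: "0 \<le> (\<Sum>x\<in>F. (cmod (u x + z x))^2 * w x)"
      have "(sqrt (\<Sum>x\<in>F. (cmod (u x + z x))^2 * w x))^2 \<le> (sqrt U + sqrt Z)^2"
        by (rule power_mono[OF a1]) (rule real_sqrt_ge_zero[OF a2])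
      thus ?thesis by (simp only: real_sqrt_pow2[OF a2])
    qed
  qed
  hence "sqrt (infsum (\<lambda>x. (cmod (u x + z x))^2 * w x) A) \<le> sqrt ((sqrt U + sqrt Z)^2)"
    by (rule real_sqrt_le_mono)
  also have "\<dots> = sqrt U + sqrt Z" using U0 Z0 by simp
  finally show "sqrt (infsum (\<lambda>x. (cmod (u x + z x))^2 * w x) A)
          \<le> sqrt (infsum (\<lambda>x. (cmod (u x))^2 * w x) A) + sqrt (infsum (\<lambda>x. (cmod (z x))^2 * w x) A)"
    unfolding U_def Z_def .
qed

lemma finite_sum_summable:
  fixes F :: "'i \<Rightarrow> 'b \<Rightarrow> real"
  assumes "finite I" "\<And>i. i \<in> I \<Longrightarrow> F i summable_on A"
  shows "(\<lambda>x. \<Sum>i\<in>I. F i x) summable_on A \<and> infsum (\<lambda>x. \<Sum>i\<in>I. F i x) A = (\<Sum>i\<in>I. infsum (F i) A)"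
  using assms
proof (induction I rule: finite_induct)
  case empty thus ?case by simp
next
  case (insert j I)
  have sj: "F j summable_on A" using insert by simp
  have IH: "(\<lambda>x. \<Sum>i\<in>I. F i x) summable_on A \<and> infsum (\<lambda>x. \<Sum>i\<in>I. F i x) A = (\<Sum>i\<in>I. infsum (F i) A)"
    using insert by simp
  have eq: "(\<lambda>x. \<Sum>i\<in>insert j I. F i x) = (\<lambda>x. F j x + (\<Sum>i\<in>I. F i x))"
    using insert by simp
  show ?case unfolding eq
    using summable_on_add[OF sj IH[THEN conjunct1]] infsum_add[OF sj IH[THEN conjunct1]] IH insert
    by simp
qed

context LF begin

lemma wt_pos: "0 < wt p f n" unfolding wt_def using p_ge2 by simp

lemma wt_succ: "wt p f n = real (p ^ f) * wt p f (n + 1)"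
proof -
  have pp: "real p > 0" using p_ge2 by simp
  have "-(real_of_int (n+1) * real f) = -(real_of_int n * real f) - real f" by (simp add: algebra_simps)
  hence "wt p f (n+1) = real p powr (-(real_of_int n * real f)) / real p powr real f"
    unfolding wt_def by (simp add: powr_diff)
  moreover have "real p powr real f = real (p ^ f)" using pp by (simp add: powr_realpow)
  ultimately show ?thesis unfolding wt_def using pp by simp
qed

definition lv :: "(int \<Rightarrow> 'a \<Rightarrow> complex) \<Rightarrow> int \<Rightarrow> real" where
  "lv \<phi> n = infsum (\<lambda>x. (cmod (\<phi> n x))^2 * wt p f n) (X n)"

lemma inH_sum: "inH p f \<pi> S \<phi> \<Longrightarrow> (\<lambda>(n, x). (cmod (\<phi> n x))^2 * wt p f n) summable_on Sigma UNIV X"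
  unfolding inH_def by blast

lemma inH_level: "inH p f \<pi> S \<phi> \<Longrightarrow> (\<lambda>x. (cmod (\<phi> n x))^2 * wt p f n) summable_on X n"
  using summable_on_SigmaD1[where f="\<lambda>n x. (cmod (\<phi> n x))^2 * wt p f n", OF inH_sum] by simp

lemma hnorm2_lv: "inH p f \<pi> S \<phi> \<Longrightarrow> hnorm2 p f \<pi> S \<phi> = infsum (lv \<phi>) UNIV"
  unfolding hnorm2_def lv_def
  using infsum_Sigma'_banach[where f="\<lambda>n x. (cmod (\<phi> n x))^2 * wt p f n", OF inH_sum] by simp

lemma lv_summable: "inH p f \<pi> S \<phi> \<Longrightarrow> lv \<phi> summable_on UNIV"
  unfolding lv_def
  using summable_on_Sigma_banach[where f="\<lambda>n x. (cmod (\<phi> n x))^2 * wt p f n", OF inH_sum] by simp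

lemma lv_nonneg: "0 \<le> lv \<phi> n"
  unfolding lv_def by (rule infsum_nonneg) (simp add: wt_pos less_imp_le)

lemma hnorm2_nonneg: "0 \<le> hnorm2 p f \<pi> S \<phi>"
  unfolding hnorm2_def by (rule infsum_nonneg) (auto simp: wt_pos less_imp_le)

lemma lv_le: "inH p f \<pi> S \<phi> \<Longrightarrow> lv \<phi> n \<le> hnorm2 p f \<pi> S \<phi>"
  using single_le_infsum[OF lv_summable, of \<phi> n] lv_nonneg hnorm2_lv by simp

lemma lv_tends0:
  assumes "inH p f \<pi> S \<phi>" "\<eta> > 0"
  shows "\<exists>N. \<forall>m\<ge>N. lv \<phi> m \<le> \<eta>"
proof -
  obtain F where F: "finite F" "infsum (lv \<phi>) (UNIV - F) \<le> \<eta>"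
    using tail_small[OF lv_summable[OF assms(1)] _ assms(2)] lv_nonneg by blast
  define N where "N = Max (insert 0 F) + 1"
  have "lv \<phi> m \<le> \<eta>" if "m \<ge> N" for m
  proof -
    have "m \<notin> F"
    proof
      assume "m \<in> F"
      hence "m \<le> Max (insert 0 F)" using F(1) by simp
      thus False using that unfolding N_def by simp
    qed
    have "lv \<phi> m \<le> infsum (lv \<phi>) (UNIV - F)"
      by (rule single_le_infsum) (use summable_on_subset[OF lv_summable[OF assms(1)]] lv_nonneg \<open>m \<notin> F\<close> in auto)
    thus ?thesis using F(2) by simp
  qed
  thus ?thesis by blast
qed

lemma inj_trans: "inj_on (\<lambda>x. x + s * \<pi> powi n) A"
  by (rule inj_onI) simp

lemma trans_sum:
  assumes H: "inH p f \<pi> S \<phi>"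
  shows "(\<lambda>x. \<Sum>s\<in>S. (cmod (\<phi> (n+1) (x + s * \<pi> powi n)))^2 * wt p f (n+1)) summable_on X n
       \<and> infsum (\<lambda>x. \<Sum>s\<in>S. (cmod (\<phi> (n+1) (x + s * \<pi> powi n)))^2 * wt p f (n+1)) (X n) = lv \<phi> (n+1)"
proof -
  define g where "g = (\<lambda>y. (cmod (\<phi> (n+1) y))^2 * wt p f (n+1))"
  define T where "T = (\<lambda>s. (\<lambda>x. x + s * \<pi> powi n) ` X n)"
  have gs: "g summable_on X (n+1)" unfolding g_def by (rule inH_level[OF H])
  have TX: "s \<in> S \<Longrightarrow> T s \<subseteq> X (n+1)" for s unfolding T_def using Xsucc by blast
  have gT: "s \<in> S \<Longrightarrow> g summable_on T s" for s using summable_on_subset[OF gs TX] by blast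
  have F: "s \<in> S \<Longrightarrow> (\<lambda>x. g (x + s * \<pi> powi n)) summable_on X n
            \<and> infsum (\<lambda>x. g (x + s * \<pi> powi n)) (X n) = infsum g (T s)" for s
  proof -
    assume s: "s \<in> S"
    have "(g \<circ> (\<lambda>x. x + s * \<pi> powi n)) summable_on X n"
      using gT[OF s] summable_on_reindex[OF inj_trans] unfolding T_def by blast
    moreover have "infsum g (T s) = infsum (g \<circ> (\<lambda>x. x + s * \<pi> powi n)) (X n)"
      unfolding T_def by (rule infsum_reindex[OF inj_trans])
    ultimately show ?thesis by (simp add: o_def)
  qed
  have A: "(\<lambda>x. \<Sum>s\<in>S. g (x + s * \<pi> powi n)) summable_on X n
        \<and> infsum (\<lambda>x. \<Sum>s\<in>S. g (x + s * \<pi> powi n)) (X n) = (\<Sum>s\<in>S. infsum (\<lambda>x. g (x + s * \<pi> powi n)) (X n))"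
    by (rule finite_sum_summable[where F="\<lambda>s x. g (x + s * \<pi> powi n)"]) (use finS F in auto)
  have "(\<Sum>s\<in>S. infsum (\<lambda>x. g (x + s * \<pi> powi n)) (X n)) = (\<Sum>s\<in>S. infsum g (T s))"
    using F by (intro sum.cong) auto
  also have "\<dots> = infsum g (\<Union>s\<in>S. T s)"
    by (rule sum_infsum) (use finS gT trans_disj in \<open>auto simp: T_def\<close>)
  also have "(\<Union>s\<in>S. T s) = X (n+1)" unfolding T_def using Xsucc by simp
  finally show ?thesis using A unfolding g_def lv_def by simp
qed

lemma jensen_pt:
  fixes z :: "'a \<Rightarrow> complex"
  shows "(cmod ((\<Sum>s\<in>S. z s) / of_nat (p ^ f)))^2 * wt p f n \<le> (\<Sum>s\<in>S. (cmod (z s))^2 * wt p f (n+1))"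
proof -
  define N where "N = real (p ^ f)"
  have N: "N > 0" unfolding N_def using p_ge2 by simp
  have cS: "real (card S) = N" unfolding N_def cardS by simp
  have "cmod ((\<Sum>s\<in>S. z s) / of_nat (p ^ f)) = cmod (\<Sum>s\<in>S. z s) / N"
    unfolding N_def by (simp add: norm_divide norm_power)
  also have "\<dots> \<le> (\<Sum>s\<in>S. cmod (z s)) / N"
    using N by (intro divide_right_mono norm_sum) auto
  finally have a: "cmod ((\<Sum>s\<in>S. z s) / of_nat (p ^ f)) \<le> (\<Sum>s\<in>S. cmod (z s)) / N" .
  have "(cmod ((\<Sum>s\<in>S. z s) / of_nat (p ^ f)))^2 \<le> ((\<Sum>s\<in>S. cmod (z s)) / N)^2"
    using a by (intro power_mono) auto
  also have "\<dots> = (\<Sum>s\<in>S. cmod (z s))^2 / N^2" by (simp add: power_divide)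
  also have "\<dots> \<le> ((\<Sum>s\<in>S. (cmod (z s))^2) * N) / N^2"
    using sum_squared_le_sum_of_squares[of "\<lambda>s. cmod (z s)" S] cS N
    by (intro divide_right_mono) auto
  also have "\<dots> = (\<Sum>s\<in>S. (cmod (z s))^2) / N" using N by (simp add: power2_eq_square)
  finally have b: "(cmod ((\<Sum>s\<in>S. z s) / of_nat (p ^ f)))^2 \<le> (\<Sum>s\<in>S. (cmod (z s))^2) / N" .
  have "(cmod ((\<Sum>s\<in>S. z s) / of_nat (p ^ f)))^2 * wt p f n \<le> (\<Sum>s\<in>S. (cmod (z s))^2) / N * wt p f n"
    using b wt_pos[of n] by (intro mult_right_mono) auto
  also have "\<dots> = (\<Sum>s\<in>S. (cmod (z s))^2) * wt p f (n+1)"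
  proof -
    have "p \<noteq> 0" using p_ge2 by simp
    thus ?thesis using wt_succ[of n] N unfolding N_def by simp
  qed
  also have "\<dots> = (\<Sum>s\<in>S. (cmod (z s))^2 * wt p f (n+1))" by (simp add: sum_distrib_right)
  finally show ?thesis .
qed

lemma qpow_powr: "q powi n * real p powr (real_of_int n / real e) = 1"
proof -
  have pp: "real p > 0" using p_ge2 by simp
  have "q powi n = real p powr (- real_of_int n / real e)"
  proof (cases "n \<ge> 0")
    case True
    have "q powi n = q ^ nat n" using True by (simp add: power_int_def)
    also have "\<dots> = real p powr (real (nat n) * (- 1 / real e))" unfolding q_eq using pp by (simp add: powr_power)
    also have "real (nat n) = real_of_int n" using True by simp
    finally show ?thesis by simp
  next
    case False
    have "q powi n = inverse q ^ nat (- n)" using False by (simp add: power_int_def)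
    also have "inverse q = real p powr (1 / real e)" unfolding q_eq using pp
      by (simp add: powr_minus_divide divide_inverse)
    also have "(real p powr (1 / real e)) ^ nat (- n) = real p powr (real (nat (-n)) * (1 / real e))"
      using pp by (simp add: powr_power)
    also have "real (nat (-n)) = - real_of_int n" using False by simp
    finally show ?thesis by simp
  qed
  thus ?thesis using pp by (simp add: powr_add[symmetric])
qed

end

context LF begin

lemma lv_step:
  assumes D: "\<phi> \<in> domD p e f \<pi> S"
  shows "sqrt (lv \<phi> n) \<le> q powi n * sqrt (hnorm2 p f \<pi> S (Dop p e f \<pi> S \<phi>)) + sqrt (lv \<phi> (n+1))"
proof -
  define \<psi> where "\<psi> = Dop p e f \<pi> S \<phi>"
  have H: "inH p f \<pi> S \<phi>" and HD: "inH p f \<pi> S \<psi>" using D unfolding domD_def \<psi>_def by auto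
  define P where "P = real p powr (real_of_int n / real e)"
  have P0: "P > 0" unfolding P_def using p_ge2 by simp
  have qP: "q powi n * P = 1" unfolding P_def by (rule qpow_powr)
  define E where "E = (\<lambda>x. (\<Sum>s\<in>S. \<phi> (n+1) (x + s * \<pi> powi n)) / of_nat (p ^ f))"
  define u where "u = (\<lambda>x. \<psi> n x / complex_of_real P)"
  have eq: "\<phi> n x = u x + E x" if "x \<in> X n" for x
  proof -
    have "\<psi> n x = complex_of_real P * (\<phi> n x - E x)"
      unfolding \<psi>_def Dop_def E_def P_def using that by simp
    thus ?thesis unfolding u_def using P0 by simp
  qed
  have cu: "(cmod (u x))^2 * wt p f n = (1 / P^2) * ((cmod (\<psi> n x))^2 * wt p f n)" for x
    unfolding u_def using P0 by (simp add: norm_divide power_divide)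
  have su: "(\<lambda>x. (cmod (u x))^2 * wt p f n) summable_on X n"
    unfolding cu by (rule summable_on_cmult_right[OF inH_level[OF HD]])
  have TS: "(\<lambda>x. \<Sum>s\<in>S. (cmod (\<phi> (n+1) (x + s * \<pi> powi n)))^2 * wt p f (n+1)) summable_on X n
       \<and> infsum (\<lambda>x. \<Sum>s\<in>S. (cmod (\<phi> (n+1) (x + s * \<pi> powi n)))^2 * wt p f (n+1)) (X n) = lv \<phi> (n+1)"
    by (rule trans_sum[OF H])
  have jp: "(cmod (E x))^2 * wt p f n \<le> (\<Sum>s\<in>S. (cmod (\<phi> (n+1) (x + s * \<pi> powi n)))^2 * wt p f (n+1))" for x
    unfolding E_def by (rule jensen_pt)
  have sz: "(\<lambda>x. (cmod (E x))^2 * wt p f n) summable_on X n"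
    by (rule summable_on_comparison_test[OF TS[THEN conjunct1]]) (use jp wt_pos[of n] in \<open>auto intro: less_imp_le\<close>)
  have w0: "\<And>x. x \<in> X n \<Longrightarrow> 0 \<le> wt p f n" using wt_pos less_imp_le by blast
  have M: "sqrt (infsum (\<lambda>x. (cmod (u x + E x))^2 * wt p f n) (X n))
          \<le> sqrt (infsum (\<lambda>x. (cmod (u x))^2 * wt p f n) (X n)) + sqrt (infsum (\<lambda>x. (cmod (E x))^2 * wt p f n) (X n))"
    by (rule mink(2)[OF su sz w0])
  have l1: "infsum (\<lambda>x. (cmod (u x + E x))^2 * wt p f n) (X n) = lv \<phi> n"
    unfolding lv_def by (rule infsum_cong) (simp add: eq)
  have l2: "infsum (\<lambda>x. (cmod (u x))^2 * wt p f n) (X n) = (1 / P^2) * lv \<psi> n"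
    unfolding cu lv_def by (rule infsum_cmult_right) (use inH_level[OF HD] in auto)
  have "sqrt ((1 / P^2) * lv \<psi> n) = q powi n * sqrt (lv \<psi> n)"
  proof -
    have "sqrt ((1 / P^2) * lv \<psi> n) = sqrt (lv \<psi> n) / P" using P0 by (simp add: real_sqrt_mult real_sqrt_divide)
    also have "\<dots> = q powi n * sqrt (lv \<psi> n)" using qP P0 by (simp add: field_simps)
    finally show ?thesis .
  qed
  also have "\<dots> \<le> q powi n * sqrt (hnorm2 p f \<pi> S \<psi>)"
    using lv_le[OF HD, of n] qpow_pos[of n] by (intro mult_left_mono real_sqrt_le_mono) auto
  finally have l2': "sqrt (infsum (\<lambda>x. (cmod (u x))^2 * wt p f n) (X n)) \<le> q powi n * sqrt (hnorm2 p f \<pi> S \<psi>)"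
    using l2 by simp
  have "infsum (\<lambda>x. (cmod (E x))^2 * wt p f n) (X n) \<le> lv \<phi> (n+1)"
    using infsum_mono[OF sz TS[THEN conjunct1] jp] TS by simp
  hence l3: "sqrt (infsum (\<lambda>x. (cmod (E x))^2 * wt p f n) (X n)) \<le> sqrt (lv \<phi> (n+1))"
    by (rule real_sqrt_le_mono)
  show ?thesis using M[unfolded l1] l2' l3 unfolding \<psi>_def by linarith
qed

lemma lv_bound:
  assumes D: "\<phi> \<in> domD p e f \<pi> S"
  shows "lv \<phi> n \<le> (q powi n / (1 - q))^2 * hnorm2 p f \<pi> S (Dop p e f \<pi> S \<phi>)"
proof -
  have H: "inH p f \<pi> S \<phi>" using D unfolding domD_def by auto
  define b where "b = sqrt (hnorm2 p f \<pi> S (Dop p e f \<pi> S \<phi>))"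
  have b0: "0 \<le> b" unfolding b_def by (simp add: hnorm2_nonneg)
  define c where "c = 1 / (1 - q)"
  have c0: "c > 0" unfolding c_def using q_lt1 by simp
  have cq: "1 + q * c = c" unfolding c_def using q_lt1 by (simp add: field_simps)
  have main: "sqrt (lv \<phi> n) \<le> b * q powi n * c + \<eta>" if eta: "\<eta> > 0" for \<eta>
  proof -
    obtain N where N: "\<And>m. m \<ge> N \<Longrightarrow> lv \<phi> m \<le> \<eta>^2"
      using lv_tends0[OF H, of "\<eta>^2"] eta by auto
    have ind: "\<forall>m. N \<le> m + int j \<longrightarrow> sqrt (lv \<phi> m) \<le> b * q powi m * c + \<eta>" for j
    proof (induction j)
      case 0
      show ?case
      proof (intro allI impI)
        fix m assume "N \<le> m + int 0"
        hence "lv \<phi> m \<le> \<eta>^2" using N by simp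
        hence "sqrt (lv \<phi> m) \<le> sqrt (\<eta>^2)" by (rule real_sqrt_le_mono)
        hence "sqrt (lv \<phi> m) \<le> \<eta>" using eta by simp
        moreover have "0 \<le> b * q powi m * c" using b0 qpow_pos[of m] c0 by simp
        ultimately show "sqrt (lv \<phi> m) \<le> b * q powi m * c + \<eta>" by linarith
      qed
    next
      case (Suc j)
      show ?case
      proof (intro allI impI)
        fix m assume "N \<le> m + int (Suc j)"
        hence "N \<le> (m + 1) + int j" by simp
        hence ih: "sqrt (lv \<phi> (m+1)) \<le> b * q powi (m+1) * c + \<eta>" using Suc.IH by blast
        have st: "sqrt (lv \<phi> m) \<le> q powi m * b + sqrt (lv \<phi> (m+1))"
          using lv_step[OF D, of m] unfolding b_def .
        have "q powi (m+1) = q powi m * q" using q_pos by (simp add: power_int_add_1)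
        hence "q powi m * b + b * q powi (m+1) * c = b * q powi m * (1 + q * c)" by (simp add: algebra_simps)
        also have "\<dots> = b * q powi m * c" using cq by simp
        finally show "sqrt (lv \<phi> m) \<le> b * q powi m * c + \<eta>" using st ih by linarith
      qed
    qed
    show ?thesis using ind[of "nat (N - n)"] by simp
  qed
  have "sqrt (lv \<phi> n) \<le> b * q powi n * c" by (rule field_le_epsilon) (rule main)
  hence "(sqrt (lv \<phi> n))^2 \<le> (b * q powi n * c)^2"
    by (rule power_mono) (simp add: lv_nonneg)
  hence "lv \<phi> n \<le> (b * q powi n * c)^2" using lv_nonneg[of \<phi> n] by simp
  also have "\<dots> = (q powi n / (1 - q))^2 * b^2" unfolding c_def by (simp add: power_mult_distrib field_simps)
  also have "b^2 = hnorm2 p f \<pi> S (Dop p e f \<pi> S \<phi>)" unfolding b_def by (simp add: hnorm2_nonneg)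
  finally show ?thesis .
qed

end

lemma geom_int:
  fixes r :: real
  assumes r: "0 \<le> r" "r < 1"
  shows "(\<lambda>n::int. r ^ nat \<bar>n\<bar>) summable_on UNIV"
proof -
  have g1: "(\<lambda>k::nat. r ^ k) summable_on UNIV"
    using summable_on_UNIV_nonneg_real_iff[of "\<lambda>k. r ^ k"] r summable_geometric[of r] by simp
  have g2: "(\<lambda>k::nat. r ^ Suc k) summable_on UNIV"
  proof -
    have "summable (\<lambda>k::nat. r ^ Suc k)"
      using summable_mult[OF summable_geometric[of r], of r] r by (simp add: mult.commute)
    thus ?thesis using summable_on_UNIV_nonneg_real_iff[of "\<lambda>k. r ^ Suc k"] r by simp
  qed
  have A: "(\<lambda>n::int. r ^ nat \<bar>n\<bar>) summable_on (int ` UNIV)"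
    using summable_on_reindex[of int UNIV "\<lambda>n::int. r ^ nat \<bar>n\<bar>"] g1 by (simp add: o_def)
  have inj2: "inj_on (\<lambda>k::nat. - int (Suc k)) UNIV" by (rule inj_onI) simp
  have ef: "((\<lambda>n::int. r ^ nat \<bar>n\<bar>) \<circ> (\<lambda>k::nat. - int (Suc k))) = (\<lambda>k. r ^ Suc k)"
  proof (rule ext)
    fix k :: nat
    have "nat \<bar>- int (Suc k)\<bar> = Suc k" by (simp only: abs_minus_cancel abs_of_nat nat_int)
    thus "((\<lambda>n::int. r ^ nat \<bar>n\<bar>) \<circ> (\<lambda>k::nat. - int (Suc k))) k = r ^ Suc k" by (simp only: o_apply)
  qed
  have B: "(\<lambda>n::int. r ^ nat \<bar>n\<bar>) summable_on ((\<lambda>k::nat. - int (Suc k)) ` UNIV)"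
    using summable_on_reindex[OF inj2, of "\<lambda>n::int. r ^ nat \<bar>n\<bar>"] g2 unfolding ef by simp
  have U: "(UNIV :: int set) = int ` UNIV \<union> (\<lambda>k::nat. - int (Suc k)) ` UNIV"
  proof -
    have "n \<in> int ` UNIV \<union> (\<lambda>k::nat. - int (Suc k)) ` UNIV" for n :: int
    proof (cases "n \<ge> 0")
      case True thus ?thesis by (auto intro!: image_eqI[of _ _ "nat n"])
    next
      case False
      hence "n = - int (Suc (nat (- n - 1)))" by simp
      thus ?thesis by blast
    qed
    thus ?thesis by blast
  qed
  show ?thesis by (subst U) (rule summable_on_union[OF A B])
qed

locale LFA = LF v p e f \<pi> S
  for v :: "'a::field_char_0 \<Rightarrow> real" and p e f \<pi> S +
  fixes a :: "'a \<Rightarrow> complex" and \<alpha> C :: real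
  assumes alpha: "\<alpha> > 1" and Cb: "\<And>x. cmod (a x) \<le> C / (1 + v x powr \<alpha>)"
begin

lemma C0: "0 \<le> C"
proof -
  have "cmod (a 0) \<le> C / (1 + v 0 powr \<alpha>)" by (rule Cb)
  also have "v 0 = 0" using v_zero_iff by simp
  finally have "cmod (a 0) \<le> C" by simp
  thus ?thesis using norm_ge_zero[of "a 0"] by linarith
qed

lemma div_le: "0 \<le> t \<Longrightarrow> C / (1 + t) \<le> C"
  using C0 divide_left_mono[of 1 "1 + t" C] by simp

definition abd where "abd n = C / (1 + (q powi n) powr \<alpha>)"

lemma abd_nonneg: "0 \<le> abd n" unfolding abd_def using C0 by simp

lemma abd_le_C: "abd n \<le> C"
  unfolding abd_def by (rule div_le) simp

lemma abd_le2: "abd n \<le> C / ((q powi n) powr \<alpha>)"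
proof -
  have "0 < (q powi n) powr \<alpha>" using q_pos by simp
  moreover have "0 < 1 + (q powi n) powr \<alpha>" by (simp add: add_pos_nonneg)
  ultimately show ?thesis unfolding abd_def using C0
    by (intro divide_left_mono mult_pos_pos) auto
qed

lemma a_bound_ge: assumes "0 \<le> t" "t \<le> v y" shows "cmod (a y) \<le> C / (1 + t powr \<alpha>)"
proof -
  have "t powr \<alpha> \<le> v y powr \<alpha>" using assms alpha by (intro powr_mono2) auto
  moreover have "0 < 1 + t powr \<alpha>" "0 < 1 + v y powr \<alpha>" by (simp_all add: add_pos_nonneg)
  ultimately have "C / (1 + v y powr \<alpha>) \<le> C / (1 + t powr \<alpha>)" using C0 by (intro divide_left_mono mult_pos_pos) auto
  thus ?thesis using Cb[of y] by linarith
qed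

lemma rho_pt:
  assumes x: "x \<in> X n"
  shows "cmod (rho \<pi> S a \<phi> n x) \<le> abd n * cmod (\<phi> n x)"
proof (cases "x = 0")
  case True
  have "cmod (a (\<pi> powi n)) \<le> abd n" unfolding abd_def
    by (rule a_bound_ge) (simp_all add: v_pipow qpow_pos less_imp_le)
  thus ?thesis using x True unfolding rho_def by (simp add: norm_mult mult_right_mono)
next
  case False
  have "q powi n \<le> v x" using Xnz[OF x False] by simp
  hence "cmod (a x) \<le> abd n" unfolding abd_def by (intro a_bound_ge) (simp_all add: qpow_pos less_imp_le)
  thus ?thesis using x False unfolding rho_def by (simp add: norm_mult mult_right_mono)
qed

lemma rho_far:
  assumes x: "x \<in> X n" and R: "0 \<le> R" "R < v x"
  shows "cmod (rho \<pi> S a \<phi> n x) \<le> C / (1 + R powr \<alpha>) * cmod (\<phi> n x)"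
proof -
  have "x \<noteq> 0" using R v_zero_iff[of 0] by auto
  have "cmod (a x) \<le> C / (1 + R powr \<alpha>)" by (rule a_bound_ge) (use R in simp_all)
  hence "cmod (a x) * cmod (\<phi> n x) \<le> C / (1 + R powr \<alpha>) * cmod (\<phi> n x)"
    by (rule mult_right_mono) simp
  thus ?thesis using x \<open>x \<noteq> 0\<close> unfolding rho_def by (simp only: if_True if_False norm_mult)
qed

lemma rho_sq_le:
  assumes "x \<in> X n" "cmod (rho \<pi> S a \<phi> n x) \<le> K * cmod (\<phi> n x)" "0 \<le> K"
  shows "(cmod (rho \<pi> S a \<phi> n x))^2 * wt p f n \<le> K^2 * ((cmod (\<phi> n x))^2 * wt p f n)"
proof -
  have "(cmod (rho \<pi> S a \<phi> n x))^2 \<le> (K * cmod (\<phi> n x))^2"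
    using assms by (intro power_mono) auto
  hence "(cmod (rho \<pi> S a \<phi> n x))^2 * wt p f n \<le> (K * cmod (\<phi> n x))^2 * wt p f n"
    using wt_pos[of n] by (intro mult_right_mono) auto
  thus ?thesis by (simp add: power_mult_distrib)
qed

lemma rho_sum:
  assumes H: "inH p f \<pi> S \<phi>"
  shows "(\<lambda>(n, x). (cmod (rho \<pi> S a \<phi> n x))^2 * wt p f n) summable_on Sigma UNIV X"
proof (rule summable_on_comparison_test)
  have e: "(\<lambda>(n, x). C^2 * ((cmod (\<phi> n x))^2 * wt p f n))
      = (\<lambda>nx. C^2 * ((\<lambda>(n, x). (cmod (\<phi> n x))^2 * wt p f n) nx))" by (auto simp: fun_eq_iff)
  show "(\<lambda>(n, x). C^2 * ((cmod (\<phi> n x))^2 * wt p f n)) summable_on Sigma UNIV X"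
    unfolding e by (rule summable_on_cmult_right[OF inH_sum[OF H]])
  fix nx assume nx: "nx \<in> Sigma UNIV X"
  obtain n x where nxe: "nx = (n, x)" by fastforce
  have x: "x \<in> X n" using nx nxe by simp
  have "cmod (rho \<pi> S a \<phi> n x) \<le> C * cmod (\<phi> n x)"
    using rho_pt[OF x, of \<phi>] abd_le_C[of n] by (meson mult_right_mono norm_ge_zero order_trans)
  from rho_sq_le[OF x this C0]
  show "(case nx of (n, x) \<Rightarrow> (cmod (rho \<pi> S a \<phi> n x))\<^sup>2 * wt p f n)
        \<le> (case nx of (n, x) \<Rightarrow> C\<^sup>2 * ((cmod (\<phi> n x))\<^sup>2 * wt p f n))" using nxe by simp
  show "0 \<le> (case nx of (n, x) \<Rightarrow> (cmod (rho \<pi> S a \<phi> n x))\<^sup>2 * wt p f n)"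
    using nxe wt_pos[of n] by simp
qed

lemma rho_level:
  assumes H: "inH p f \<pi> S \<phi>"
  shows "(\<lambda>x. (cmod (rho \<pi> S a \<phi> n x))^2 * wt p f n) summable_on X n"
  using summable_on_SigmaD1[where f="\<lambda>n x. (cmod (rho \<pi> S a \<phi> n x))^2 * wt p f n", OF rho_sum[OF H]]
  by simp

lemma lv_rho:
  assumes H: "inH p f \<pi> S \<phi>"
  shows "lv (rho \<pi> S a \<phi>) n \<le> (abd n)^2 * lv \<phi> n"
proof -
  have "lv (rho \<pi> S a \<phi>) n \<le> infsum (\<lambda>x. (abd n)^2 * ((cmod (\<phi> n x))^2 * wt p f n)) (X n)"
    unfolding lv_def
  proof (rule infsum_mono[OF rho_level[OF H]])
    show "(\<lambda>x. (abd n)\<^sup>2 * ((cmod (\<phi> n x))\<^sup>2 * wt p f n)) summable_on X n"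
      by (rule summable_on_cmult_right[OF inH_level[OF H]])
    fix x assume x: "x \<in> X n"
    show "(cmod (rho \<pi> S a \<phi> n x))\<^sup>2 * wt p f n \<le> (abd n)\<^sup>2 * ((cmod (\<phi> n x))\<^sup>2 * wt p f n)"
      by (rule rho_sq_le[OF x rho_pt[OF x] abd_nonneg])
  qed
  also have "\<dots> = (abd n)^2 * lv \<phi> n" unfolding lv_def
    by (rule infsum_cmult_right) (use inH_level[OF H] in auto)
  finally show ?thesis .
qed

definition hb where "hb n = (abd n)^2 * (q powi n / (1 - q))^2"

lemma hb_nonneg: "0 \<le> hb n" unfolding hb_def by simp

lemma hb_summable: "hb summable_on UNIV"
proof -
  define Q where "Q = inverse q"
  have Q1: "Q > 1" unfolding Q_def using q_pos q_lt1 by (simp add: one_less_inverse)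
  have Qa: "Q < Q powr \<alpha>" using Q1 alpha powr_less_mono[of 1 \<alpha> Q] by simp
  define r where "r = max (q^2) ((Q / Q powr \<alpha>)^2)"
  have r0: "0 \<le> r" unfolding r_def by (rule order_trans[OF zero_le_power2 max.cobounded1])
  have r1: "r < 1"
  proof -
    have "q^2 < 1" using q_pos q_lt1 by (simp add: power_less_one_iff abs_less_iff)
    moreover have "Q / Q powr \<alpha> < 1" using Qa Q1 by simp
    hence "(Q / Q powr \<alpha>)^2 < 1" using Q1 by (simp add: power_less_one_iff abs_less_iff)
    ultimately show ?thesis unfolding r_def by simp
  qed
  define K where "K = C^2 / (1 - q)^2"
  have bound: "hb n \<le> K * r ^ nat \<bar>n\<bar>" for n
  proof (cases "n \<ge> 0")
    case True
    have qn: "q powi n = q ^ nat n" using True by (simp add: power_int_def)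
    have "hb n \<le> C^2 * (q powi n / (1 - q))^2"
      unfolding hb_def using abd_le_C[of n] abd_nonneg[of n]
      by (intro mult_right_mono power_mono) auto
    also have "\<dots> = K * (q^2) ^ nat n" unfolding K_def qn by (simp add: power_divide power_mult[symmetric] power_mult_distrib mult.commute)
    also have "\<dots> \<le> K * r ^ nat \<bar>n\<bar>"
    proof -
      have "(q^2) ^ nat n \<le> r ^ nat n" unfolding r_def by (rule power_mono[OF max.cobounded1]) simp
      thus ?thesis using True unfolding K_def by (intro mult_left_mono) auto
    qed
    finally show ?thesis .
  next
    case False
    define k where "k = nat (- n)"
    have qn: "q powi n = Q ^ k" using False unfolding Q_def k_def by (simp add: power_int_def)
    have Qk: "0 < Q ^ k" using Q1 by simp
    have pw: "(Q ^ k) powr \<alpha> = (Q powr \<alpha>) ^ k"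
      using Q1 by (simp add: powr_realpow[symmetric] powr_powr powr_power mult.commute)
    have "hb n \<le> (C / ((q powi n) powr \<alpha>))^2 * (q powi n / (1 - q))^2"
      unfolding hb_def using abd_le2[of n] abd_nonneg[of n]
      by (intro mult_right_mono power_mono) auto
    also have "\<dots> = K * ((Q / Q powr \<alpha>)^2) ^ k"
      unfolding K_def qn pw using Qk Q1
      by (simp add: power_divide power_mult_distrib field_simps flip: power_mult)
    also have "\<dots> \<le> K * r ^ nat \<bar>n\<bar>"
    proof -
      have "((Q / Q powr \<alpha>)^2) ^ k \<le> r ^ k" unfolding r_def by (rule power_mono[OF max.cobounded2]) simp
      moreover have "nat \<bar>n\<bar> = k" using False unfolding k_def by simp
      ultimately show ?thesis unfolding K_def by (intro mult_left_mono) auto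
    qed
    finally show ?thesis .
  qed
  have "(\<lambda>n. K * r ^ nat \<bar>n\<bar>) summable_on UNIV"
    by (rule summable_on_cmult_right[OF geom_int[OF r0 r1]])
  thus ?thesis
    by (rule summable_on_comparison_test) (use bound hb_nonneg in auto)
qed

end

context LFA begin

lemma lv_rho_bound:
  assumes D: "\<phi> \<in> domD p e f \<pi> S" and Bb: "hnorm2 p f \<pi> S (Dop p e f \<pi> S \<phi>) \<le> B"
  shows "lv (rho \<pi> S a \<phi>) n \<le> hb n * B"
proof -
  have H: "inH p f \<pi> S \<phi>" using D unfolding domD_def by auto
  have "lv (rho \<pi> S a \<phi>) n \<le> (abd n)^2 * lv \<phi> n" by (rule lv_rho[OF H])
  also have "\<dots> \<le> (abd n)^2 * ((q powi n / (1 - q))^2 * hnorm2 p f \<pi> S (Dop p e f \<pi> S \<phi>))"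
    by (rule mult_left_mono[OF lv_bound[OF D]]) simp
  also have "\<dots> \<le> (abd n)^2 * ((q powi n / (1 - q))^2 * B)"
    by (intro mult_left_mono Bb) simp_all
  also have "\<dots> = hb n * B" unfolding hb_def by simp
  finally show ?thesis .
qed

lemma tail_bound:
  assumes D: "\<phi> \<in> domD p e f \<pi> S" and Bb: "hnorm2 p f \<pi> S (Dop p e f \<pi> S \<phi>) \<le> B"
    and F: "finite F" and R: "0 \<le> R"
  shows "infsum (\<lambda>(n, x). (cmod (rho \<pi> S a \<phi> n x))^2 * wt p f n)
            (Sigma UNIV X - Sigma F (\<lambda>n. {x \<in> X n. v x \<le> R}))
     \<le> (C / (1 + R powr \<alpha>))^2 * (\<Sum>n\<in>F. (q powi n / (1 - q))^2 * B) + infsum (\<lambda>n. hb n * B) (UNIV - F)"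
proof -
  have H: "inH p f \<pi> S \<phi>" using D unfolding domD_def by auto
  have B0: "0 \<le> B" using Bb hnorm2_nonneg order_trans by blast
  define u where "u = rho \<pi> S a \<phi>"
  define Tn where "Tn n = (if n \<in> F then {x \<in> X n. R < v x} else X n)" for n
  have TX: "Tn n \<subseteq> X n" for n unfolding Tn_def by auto
  have eqS: "Sigma UNIV X - Sigma F (\<lambda>n. {x \<in> X n. v x \<le> R}) = Sigma UNIV Tn"
    unfolding Tn_def by (auto split: if_splits)
  have su: "(\<lambda>(n, x). (cmod (u n x))^2 * wt p f n) summable_on Sigma UNIV Tn"
    by (rule summable_on_subset[OF rho_sum[OF H, folded u_def]]) (use TX in auto)
  define t where "t n = infsum (\<lambda>x. (cmod (u n x))^2 * wt p f n) (Tn n)" for n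
  have tot: "infsum (\<lambda>(n, x). (cmod (u n x))^2 * wt p f n) (Sigma UNIV Tn) = infsum t UNIV"
    unfolding t_def
    using infsum_Sigma'_banach[where f="\<lambda>n x. (cmod (u n x))^2 * wt p f n", OF su] by simp
  have ts: "t summable_on UNIV"
    unfolding t_def
    using summable_on_Sigma_banach[where f="\<lambda>n x. (cmod (u n x))^2 * wt p f n", OF su] by simp
  have t0: "0 \<le> t n" for n unfolding t_def by (rule infsum_nonneg) (simp add: wt_pos less_imp_le)
  have ul: "(\<lambda>x. (cmod (u n x))^2 * wt p f n) summable_on X n" for n
    unfolding u_def by (rule rho_level[OF H])
  have t_le_lv: "t n \<le> lv u n" for n
    unfolding t_def lv_def
    by (rule infsum_mono2[OF summable_on_subset[OF ul TX] ul TX]) (simp add: wt_pos less_imp_le)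
  define c where "c = C / (1 + R powr \<alpha>)"
  have tF: "t n \<le> c^2 * ((q powi n / (1 - q))^2 * B)" if nF: "n \<in> F" for n
  proof -
    have Tn: "Tn n = {x \<in> X n. R < v x}" using nF unfolding Tn_def by simp
    have pl: "(\<lambda>x. (cmod (\<phi> n x))^2 * wt p f n) summable_on X n" by (rule inH_level[OF H])
    have "t n \<le> infsum (\<lambda>x. c^2 * ((cmod (\<phi> n x))^2 * wt p f n)) (Tn n)"
      unfolding t_def
    proof (rule infsum_mono)
      show "(\<lambda>x. (cmod (u n x))\<^sup>2 * wt p f n) summable_on Tn n" by (rule summable_on_subset[OF ul TX])
      show "(\<lambda>x. c\<^sup>2 * ((cmod (\<phi> n x))\<^sup>2 * wt p f n)) summable_on Tn n"
        by (rule summable_on_cmult_right[OF summable_on_subset[OF pl TX]])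
      fix x assume "x \<in> Tn n"
      hence x: "x \<in> X n" "R < v x" using Tn by auto
      have c0: "0 \<le> c" unfolding c_def using C0 by (simp add: add_pos_nonneg)
      show "(cmod (u n x))\<^sup>2 * wt p f n \<le> c\<^sup>2 * ((cmod (\<phi> n x))\<^sup>2 * wt p f n)"
        unfolding u_def by (rule rho_sq_le[OF x(1) _ c0]) (unfold c_def, rule rho_far[OF x(1) R x(2)])
    qed
    also have "\<dots> = c^2 * infsum (\<lambda>x. (cmod (\<phi> n x))^2 * wt p f n) (Tn n)"
      by (rule infsum_cmult_right) (rule summable_on_subset[OF pl TX])
    also have "\<dots> \<le> c^2 * lv \<phi> n"
      unfolding lv_def
      by (intro mult_left_mono infsum_mono2[OF summable_on_subset[OF pl TX] pl TX]) (simp_all add: wt_pos less_imp_le)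
    also have "\<dots> \<le> c^2 * ((q powi n / (1 - q))^2 * B)"
    proof (rule mult_left_mono)
      have "lv \<phi> n \<le> (q powi n / (1 - q))^2 * hnorm2 p f \<pi> S (Dop p e f \<pi> S \<phi>)" by (rule lv_bound[OF D])
      also have "\<dots> \<le> (q powi n / (1 - q))^2 * B" by (intro mult_left_mono Bb) simp
      finally show "lv \<phi> n \<le> (q powi n / (1 - q))^2 * B" .
    qed simp
    finally show ?thesis .
  qed
  have "infsum t UNIV = infsum t (F \<union> (UNIV - F))" by simp
  also have "\<dots> = infsum t F + infsum t (UNIV - F)"
    by (rule infsum_Un_disjoint) (use ts F in \<open>auto intro: summable_on_subset\<close>)
  also have "infsum t F = (\<Sum>n\<in>F. t n)" using F by simp
  also have "(\<Sum>n\<in>F. t n) \<le> (\<Sum>n\<in>F. c^2 * ((q powi n / (1 - q))^2 * B))"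
    by (rule sum_mono) (rule tF)
  also have "\<dots> = c^2 * (\<Sum>n\<in>F. (q powi n / (1 - q))^2 * B)" by (simp add: sum_distrib_left)
  also have "infsum t (UNIV - F) \<le> infsum (\<lambda>n. hb n * B) (UNIV - F)"
  proof (rule infsum_mono)
    show "t summable_on UNIV - F" by (rule summable_on_subset[OF ts]) simp
    show "(\<lambda>n. hb n * B) summable_on UNIV - F"
      by (rule summable_on_subset[OF summable_on_cmult_left[OF hb_summable]]) simp
    fix n
    show "t n \<le> hb n * B" using t_le_lv[of n] lv_rho_bound[OF D Bb, of n] unfolding u_def by linarith
  qed
  finally have "infsum t UNIV \<le> c^2 * (\<Sum>n\<in>F. (q powi n / (1 - q))^2 * B) + infsum (\<lambda>n. hb n * B) (UNIV - F)"
    by simp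
  thus ?thesis unfolding eqS using tot unfolding u_def c_def by simp
qed

end

context LFA begin

lemma compact_main: "rhoDinv_compact p e f \<pi> S a"
  unfolding rhoDinv_compact_def
proof (intro allI impI)
  fix \<phi>s :: "nat \<Rightarrow> int \<Rightarrow> 'a \<Rightarrow> complex"
  assume asm: "(\<forall>j. \<phi>s j \<in> domD p e f \<pi> S) \<and> (\<exists>B. \<forall>j. hnorm2 p f \<pi> S (Dop p e f \<pi> S (\<phi>s j)) \<le> B)"
  then obtain B where Dj: "\<And>j. \<phi>s j \<in> domD p e f \<pi> S"
    and Bj: "\<And>j. hnorm2 p f \<pi> S (Dop p e f \<pi> S (\<phi>s j)) \<le> B" by blast
  have Hj: "\<And>j. inH p f \<pi> S (\<phi>s j)" using Dj unfolding domD_def by auto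
  have B0: "0 \<le> B" using Bj[of 0] hnorm2_nonneg order_trans by blast
  define g where "g j = rho \<pi> S a (\<phi>s j)" for j
  define I where "I = Sigma UNIV X"
  define hB where "hB n = hb n * B" for n
  have hB0: "0 \<le> hB n" for n unfolding hB_def using hb_nonneg B0 by simp
  have hBs: "hB summable_on UNIV" unfolding hB_def by (rule summable_on_cmult_left[OF hb_summable])
  have lvg: "lv (g j) n \<le> hB n" for j n
    unfolding g_def hB_def by (rule lv_rho_bound[OF Dj Bj])
  have gsum: "(\<lambda>(n, x). (cmod (g j n x))^2 * wt p f n) summable_on I" for j
    unfolding g_def I_def by (rule rho_sum[OF Hj])
  have glev: "(\<lambda>x. (cmod (g j n x))^2 * wt p f n) summable_on X n" for j n
    unfolding g_def by (rule rho_level[OF Hj])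
  have coord: "cmod (g j n x) \<le> sqrt (hB n / wt p f n)" if "x \<in> X n" for j n x
  proof -
    have "(cmod (g j n x))^2 * wt p f n \<le> lv (g j) n"
      unfolding lv_def by (rule single_le_infsum[OF glev _ that]) (simp add: wt_pos less_imp_le)
    also have "\<dots> \<le> hB n" by (rule lvg)
    finally have "(cmod (g j n x))^2 \<le> hB n / wt p f n"
      using wt_pos[of n] by (simp add: pos_le_divide_eq)
    hence "sqrt ((cmod (g j n x))^2) \<le> sqrt (hB n / wt p f n)" by (rule real_sqrt_le_mono)
    thus ?thesis by simp
  qed
  define G where "G j nx = g j (fst nx) (snd nx)" for j nx
  have Ine: "I \<noteq> {}" unfolding I_def using X0[of 0] by blast
  have Icnt: "countable I" unfolding I_def by (rule Icount)
  define en where "en = from_nat_into I"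
  have en_range: "range en = I" unfolding en_def using Ine Icnt by simp
  have enI: "en k \<in> I" for k using en_range by blast
  interpret SS: subseqs "\<lambda>k s. convergent (\<lambda>i. G (s i) (en k))"
  proof unfold_locales
    fix k and s :: "nat \<Rightarrow> nat"
    assume "strict_mono s"
    obtain n x where nx: "en k = (n, x)" by fastforce
    have x: "x \<in> X n" using enI[of k] nx unfolding I_def by simp
    have "bounded (range (\<lambda>i. G (s i) (en k)))"
      unfolding bounded_iff
      by (rule exI[of _ "sqrt (hB n / wt p f n)"]) (auto simp: G_def nx intro: coord[OF x])
    then obtain l r where r: "strict_mono r" "((\<lambda>i. G (s i) (en k)) \<circ> r) \<longlonglongrightarrow> l"
      using bounded_imp_convergent_subsequence by blast
    thus "\<exists>r'. strict_mono r' \<and> convergent (\<lambda>i. G ((s \<circ> r') i) (en k))"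
      by (intro exI[of _ r]) (auto simp: convergent_def o_def)
  qed
  define r where "r = SS.diagseq"
  have r_mono: "strict_mono r" unfolding r_def by (rule SS.subseq_diagseq)
  have conv: "convergent (\<lambda>i. G (r i) (en k))" for k
  proof -
    have "convergent (\<lambda>i. G ((SS.diagseq \<circ> (+) (Suc k)) i) (en k))"
    proof (rule SS.diagseq_holds)
      fix r' s n
      assume "strict_mono (r' :: nat \<Rightarrow> nat)" "convergent (\<lambda>i. G (s i) (en n))"
      from convergent_subseq_convergent[OF this(2) this(1)]
      show "convergent (\<lambda>i. G ((s \<circ> r') i) (en n))" by (simp add: o_def)
    qed
    then obtain L where "(\<lambda>i. G (SS.diagseq (i + Suc k)) (en k)) \<longlonglongrightarrow> L"
      unfolding convergent_def by (auto simp: o_def add.commute)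
    hence "(\<lambda>i. G (SS.diagseq i) (en k)) \<longlonglongrightarrow> L"
      by (rule LIMSEQ_offset[where f="\<lambda>i. G (SS.diagseq i) (en k)"])
    thus ?thesis unfolding r_def convergent_def by blast
  qed
  have "\<forall>idx\<in>I. \<exists>L. (\<lambda>i. G (r i) idx) \<longlonglongrightarrow> L"
  proof
    fix idx assume "idx \<in> I"
    then obtain k where "idx = en k" using en_range by blast
    thus "\<exists>L. (\<lambda>i. G (r i) idx) \<longlonglongrightarrow> L" using conv[of k] unfolding convergent_def by blast
  qed
  then obtain L where L: "\<And>idx. idx \<in> I \<Longrightarrow> (\<lambda>i. G (r i) idx) \<longlonglongrightarrow> L idx"
    by metis
  have "\<forall>\<epsilon>>0. \<exists>N. \<forall>i\<ge>N. \<forall>j\<ge>N.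
           hnorm2 p f \<pi> S (rho \<pi> S a (\<phi>s (r i)) - rho \<pi> S a (\<phi>s (r j))) < \<epsilon>"
  proof (intro allI impI)
    fix \<epsilon> :: real assume \<epsilon>: "\<epsilon> > 0"
    define \<eta> where "\<eta> = \<epsilon> / 32"
    have \<eta>0: "\<eta> > 0" unfolding \<eta>_def using \<epsilon> by simp
    obtain F where F: "finite F" "infsum hB (UNIV - F) \<le> \<eta>"
      using tail_small[OF hBs _ \<eta>0] hB0 by blast
    define Hs where "Hs = (\<Sum>n\<in>F. (q powi n / (1 - q))^2 * B)"
    have Hs0: "0 \<le> Hs" unfolding Hs_def using B0 by (intro sum_nonneg) simp
    define M where "M = C^2 * Hs / \<eta>"
    have M0: "0 \<le> M" unfolding M_def using Hs0 \<eta>0 by simp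
    define R where "R = max 1 M"
    have R1: "1 \<le> R" unfolding R_def by simp
    have R0: "0 \<le> R" using R1 by simp
    have Rfar: "(C / (1 + R powr \<alpha>))^2 * Hs \<le> \<eta>"
    proof -
      define t where "t = R powr \<alpha>"
      have "R powr 1 \<le> R powr \<alpha>" using R1 alpha by (intro powr_mono) auto
      hence tR: "R \<le> t" unfolding t_def using R0 by simp
      have tM: "M \<le> t" using tR unfolding R_def by simp
      have t0: "0 \<le> t" unfolding t_def by simp
      have "C^2 * Hs = M * \<eta>" unfolding M_def using \<eta>0 by simp
      also have "\<dots> \<le> t * \<eta>" using tM \<eta>0 by (intro mult_right_mono) auto
      also have "\<dots> \<le> (1 + t)^2 * \<eta>"
      proof (rule mult_right_mono)
        show "t \<le> (1 + t)^2" using t0 by (simp add: power2_eq_square algebra_simps)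
      qed (use \<eta>0 in simp)
      finally have a: "C^2 * Hs \<le> (1 + t)^2 * \<eta>" .
      have "(C / (1 + t))^2 * Hs = C^2 * Hs / (1 + t)^2" by (simp add: power_divide)
      also have "\<dots> \<le> \<eta>" using a t0 by (simp add: pos_divide_le_eq add_pos_nonneg mult.commute)
      finally show ?thesis unfolding t_def .
    qed
    define K where "K = Sigma F (\<lambda>n. {x \<in> X n. v x \<le> R})"
    have Kfin: "finite K" unfolding K_def by (intro finite_SigmaI F(1) Xfin)
    have KI: "K \<subseteq> I" unfolding K_def I_def by auto
    define W where "W = (\<Sum>nx\<in>K. wt p f (fst nx))"
    have W0: "0 \<le> W" unfolding W_def by (intro sum_nonneg) (simp add: wt_pos less_imp_le)
    define \<delta> where "\<delta> = sqrt (\<epsilon> / (16 * (W + 1)))"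
    have \<delta>0: "\<delta> > 0" unfolding \<delta>_def using \<epsilon> W0 by simp
    have \<delta>sq: "4 * \<delta>^2 * W \<le> \<epsilon> / 4"
    proof -
      have "\<delta>^2 = \<epsilon> / (16 * (W + 1))" unfolding \<delta>_def using \<epsilon> W0 by simp
      hence "4 * \<delta>^2 * W = \<epsilon> / 4 * (W / (W + 1))" using W0 by (simp add: field_simps)
      also have "\<dots> \<le> \<epsilon> / 4 * 1" using W0 \<epsilon> by (intro mult_left_mono) auto
      finally show ?thesis by simp
    qed
    have "eventually (\<lambda>i. \<forall>idx\<in>K. dist (G (r i) idx) (L idx) < \<delta>) sequentially"
    proof (rule eventually_ball_finite[OF Kfin], rule ballI)
      fix idx assume "idx \<in> K"
      hence "idx \<in> I" using KI by blast
      from L[OF this] show "eventually (\<lambda>i. dist (G (r i) idx) (L idx) < \<delta>) sequentially"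
        using \<delta>0 by (rule tendstoD)
    qed
    then obtain N where N: "\<And>i. i \<ge> N \<Longrightarrow> \<forall>idx\<in>K. dist (G (r i) idx) (L idx) < \<delta>"
      unfolding eventually_sequentially by blast
    define sq where "sq u = (\<lambda>(n, x). (cmod (u n x))^2 * wt p f n)" for u :: "int \<Rightarrow> 'a \<Rightarrow> complex"
    have tailg: "infsum (sq (g j)) (I - K) \<le> 2 * \<eta>" for j
    proof -
      have "infsum (sq (g j)) (I - K)
          \<le> (C / (1 + R powr \<alpha>))^2 * Hs + infsum (\<lambda>n. hb n * B) (UNIV - F)"
        unfolding sq_def g_def I_def K_def Hs_def by (rule tail_bound[OF Dj Bj F(1) R0])
      also have "infsum (\<lambda>n. hb n * B) (UNIV - F) = infsum hB (UNIV - F)" unfolding hB_def by simp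
      finally show ?thesis using Rfar F(2) by simp
    qed
    show "\<exists>N. \<forall>i\<ge>N. \<forall>j\<ge>N. hnorm2 p f \<pi> S (rho \<pi> S a (\<phi>s (r i)) - rho \<pi> S a (\<phi>s (r j))) < \<epsilon>"
    proof (intro exI[of _ N] allI impI)
      fix i j assume i: "i \<ge> N" and j: "j \<ge> N"
      define d where "d = g (r i) - g (r j)"
      have dapp: "d n x = g (r i) n x - g (r j) n x" for n x unfolding d_def by simp
      have dpt: "sq d nx \<le> 2 * sq (g (r i)) nx + 2 * sq (g (r j)) nx" for nx
      proof -
        obtain n x where nx: "nx = (n, x)" by fastforce
        have "cmod (d n x) \<le> cmod (g (r i) n x) + cmod (g (r j) n x)"
          unfolding dapp by (rule norm_triangle_ineq4)
        hence "(cmod (d n x))^2 \<le> (cmod (g (r i) n x) + cmod (g (r j) n x))^2"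
          by (intro power_mono) auto
        also have "\<dots> \<le> 2 * (cmod (g (r i) n x))^2 + 2 * (cmod (g (r j) n x))^2"
        proof -
          have "0 \<le> (cmod (g (r i) n x) - cmod (g (r j) n x))^2" by simp
          thus ?thesis unfolding power2_sum power2_diff by linarith
        qed
        finally have "(cmod (d n x))^2 * wt p f n \<le> (2 * (cmod (g (r i) n x))^2 + 2 * (cmod (g (r j) n x))^2) * wt p f n"
          using wt_pos[of n] by (intro mult_right_mono) auto
        thus ?thesis unfolding sq_def nx by (simp add: algebra_simps)
      qed
      have sq0: "0 \<le> sq u nx" for u nx unfolding sq_def by (cases nx) (simp add: wt_pos less_imp_le)
      have s2: "(\<lambda>nx. 2 * sq (g (r i)) nx + 2 * sq (g (r j)) nx) summable_on I"
        unfolding sq_def by (intro summable_on_add summable_on_cmult_right gsum)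
      have sd: "sq d summable_on I"
        by (rule summable_on_comparison_test[OF s2]) (use dpt sq0 in auto)
      have hd: "hnorm2 p f \<pi> S (rho \<pi> S a (\<phi>s (r i)) - rho \<pi> S a (\<phi>s (r j))) = infsum (sq d) I"
        unfolding hnorm2_def sq_def d_def g_def I_def by simp
      have "infsum (sq d) I = infsum (sq d) (K \<union> (I - K))" using KI by (simp add: Un_absorb1)
      also have "\<dots> = infsum (sq d) K + infsum (sq d) (I - K)"
        by (rule infsum_Un_disjoint) (use sd KI Kfin in \<open>auto intro: summable_on_subset\<close>)
      also have "infsum (sq d) K \<le> \<epsilon> / 4"
      proof -
        have "infsum (sq d) K = (\<Sum>nx\<in>K. sq d nx)" using Kfin by simp
        also have "\<dots> \<le> (\<Sum>nx\<in>K. 4 * \<delta>^2 * wt p f (fst nx))"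
        proof (rule sum_mono)
          fix nx assume nxK: "nx \<in> K"
          obtain n x where nx: "nx = (n, x)" by fastforce
          have "dist (G (r i) nx) (L nx) < \<delta>" "dist (G (r j) nx) (L nx) < \<delta>"
            using N[OF i] N[OF j] nxK by auto
          hence "dist (G (r i) nx) (G (r j) nx) < 2 * \<delta>"
            using dist_triangle3[of "G (r i) nx" "G (r j) nx" "L nx"] dist_commute[of "L nx" "G (r i) nx"]
              dist_commute[of "L nx" "G (r j) nx"] by linarith
          hence "cmod (d n x) < 2 * \<delta>" unfolding dapp G_def nx dist_norm by simp
          hence "(cmod (d n x))^2 \<le> (2 * \<delta>)^2" by (intro power_mono) auto
          hence "(cmod (d n x))^2 * wt p f n \<le> (2 * \<delta>)^2 * wt p f n"
            using wt_pos[of n] by (intro mult_right_mono) auto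
          thus "sq d nx \<le> 4 * \<delta>^2 * wt p f (fst nx)" unfolding sq_def nx by (simp add: power_mult_distrib)
        qed
        also have "\<dots> = 4 * \<delta>^2 * W" unfolding W_def by (simp add: sum_distrib_left)
        also have "\<dots> \<le> \<epsilon> / 4" by (rule \<delta>sq)
        finally show ?thesis .
      qed
      also have "infsum (sq d) (I - K) \<le> infsum (\<lambda>nx. 2 * sq (g (r i)) nx + 2 * sq (g (r j)) nx) (I - K)"
        by (rule infsum_mono) (use sd s2 dpt in \<open>auto intro: summable_on_subset\<close>)
      also have "\<dots> = 2 * infsum (sq (g (r i))) (I - K) + 2 * infsum (sq (g (r j))) (I - K)"
      proof -
        have a: "sq (g (r i)) summable_on (I - K)" "sq (g (r j)) summable_on (I - K)"
          unfolding sq_def by (auto intro: summable_on_subset gsum)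
        show ?thesis
          by (simp add: infsum_add summable_on_cmult_right a infsum_cmult_right)
      qed
      also have "\<dots> \<le> 2 * (2 * \<eta>) + 2 * (2 * \<eta>)" using tailg[of "r i"] tailg[of "r j"] by linarith
      finally have "infsum (sq d) I \<le> \<epsilon> / 4 + 8 * \<eta>" by simp
      also have "\<dots> < \<epsilon>" unfolding \<eta>_def using \<epsilon> by simp
      finally show "hnorm2 p f \<pi> S (rho \<pi> S a (\<phi>s (r i)) - rho \<pi> S a (\<phi>s (r j))) < \<epsilon>"
        using hd by simp
    qed
  qed
  hence "strict_mono r \<and> (\<forall>\<epsilon>>0. \<exists>N. \<forall>i\<ge>N. \<forall>j\<ge>N.
           hnorm2 p f \<pi> S (rho \<pi> S a (\<phi>s (r i)) - rho \<pi> S a (\<phi>s (r j))) < \<epsilon>)"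
    using r_mono by blast
  thus "\<exists>r::nat \<Rightarrow> nat. strict_mono r \<and> (\<forall>\<epsilon>>0. \<exists>N. \<forall>i\<ge>N. \<forall>j\<ge>N.
           hnorm2 p f \<pi> S (rho \<pi> S a (\<phi>s (r i)) - rho \<pi> S a (\<phi>s (r j))) < \<epsilon>)"
    by (rule exI[of _ r])
qed

end

theorem mainTheorem2:
  fixes v :: "'a::field_char_0 \<Rightarrow> real" and p e f :: nat and \<pi> :: 'a and S :: "'a set"
    and a :: "'a \<Rightarrow> complex"
  assumes "local_field_data v p e f \<pi> S"
    and "v_continuous v a"
    and "\<exists>\<alpha> C. \<alpha> > 1 \<and> \<alpha> > real e * real f / 2 \<and>
           (\<forall>x. cmod (a x) \<le> C / (1 + v x powr \<alpha>))"
  shows "rhoDinv_compact p e f \<pi> S a"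
proof -
  obtain \<alpha> C where al: "\<alpha> > 1" and Cb: "\<forall>x. cmod (a x) \<le> C / (1 + v x powr \<alpha>)"
    using assms(3) by blast
  interpret LFA v p e f \<pi> S a \<alpha> C
  proof unfold_locales
    show "local_field_data v p e f \<pi> S" by (rule assms(1))
    show "\<alpha> > 1" by (rule al)
    show "\<And>x. cmod (a x) \<le> C / (1 + v x powr \<alpha>)" using Cb by blast
  qed
  show ?thesis by (rule compact_main)
qed

end
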